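(* Let $J\subseteq\mathbb R$ be an open interval, $A:J\to\mathbb R$ of class $C^3$, and $x_0\in J$ with $A''(x_0)\neq0$; let $\kappa_0=A''(x_0)/s(x_0)^3$. If $\tilde\epsilon>0$ is sufficiently small, then there is $\tilde\delta>0$ with $\tilde I=(x_0-\tilde\delta,x_0+\tilde\delta)\subset J$ (namely the $\delta$ furnished by the following local statement applied with $\epsilon=\tilde\epsilon$: for every three-tuple $\mathbf z$ of distinct points of $\Gamma(\tilde I)=\{x+iA(x):x\in\tilde I\}$ one has $|c^2(\mathbf z)-\kappa_0^2|<\tilde\epsilon$, $|\mathtt S[\mathrm{Re}K_\Gamma](\mathbf z)-\frac32c^2(\mathbf z)|<\tilde\epsilon$ and $|\mathtt S[\mathrm{Im}K_\Gamma](\mathbf z)+\frac12c^2(\mathbf z)|<\tilde\epsilon$) such that for every three-tuple $\mathbf z$ of non-collinear points in $\Gamma(\tilde I)^3$, $$\Bigl|\frac{\mathtt S[\mathrm{Re}K_\Gamma](\mathbf z)}{c^2(\mathbf z)}-\frac32\Bigr|<\frac{\tilde\epsilon}{\kappa_0^2-\tilde\epsilon},\qquad \Bigl|\frac{\mathtt S[\mathrm{Im}K_\Gamma](\mathbf z)}{c^2(\mathbf z)}+\frac12\Bigr|<\frac{\tilde\epsilon}{\kappa_0^2-\tilde\epsilon}.$$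
   Context: $\Gamma=\{x+iA(x): x\in J\}$, $s(x)=\sqrt{1+(A'(x))^2}$. The kernel (normalizing factor $1/(2\pi)$ omitted) is $K_\Gamma(w,z)=\dfrac{A'(x)-i}{s(x)\,[\,x-y+i(A(x)-A(y))\,]}$ for $w=x+iA(x)$, $z=y+iA(y)$, $x\neq y$. For $K$ defined off the diagonal and distinct $z_1,z_2,z_3$, $\mathtt S[K](\mathbf z)=\sum_{\sigma\in S_3}K(z_{\sigma(1)},z_{\sigma(2)})\overline{K(z_{\sigma(1)},z_{\sigma(3)})}$. The Menger curvature $c(\mathbf z)$ is $0$ for collinear points and otherwise the reciprocal of the radius of the circle through the three points. *)

theory Defs
  imports "HOL-Analysis.Analysis"
begin

definition C3_on :: "real set \<Rightarrow> (real \<Rightarrow> real) \<Rightarrow> bool" where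
  "C3_on J A \<longleftrightarrow>
     (\<forall>x\<in>J. (A has_real_derivative deriv A x) (at x)
        \<and> (deriv A has_real_derivative deriv (deriv A) x) (at x)
        \<and> (deriv (deriv A) has_real_derivative deriv (deriv (deriv A)) x) (at x))
     \<and> continuous_on J (deriv (deriv (deriv A)))"

definition arclen_factor :: "(real \<Rightarrow> real) \<Rightarrow> real \<Rightarrow> real" where
  "arclen_factor A x = sqrt (1 + (deriv A x)^2)"

definition graph_curve :: "(real \<Rightarrow> real) \<Rightarrow> real set \<Rightarrow> complex set" where
  "graph_curve A I = (\<lambda>x. Complex x (A x)) ` I"

text \<open>The kernel K_Gamma(w,z) (without 1/(2 pi)), with w = x + iA(x), z = y + iA(y).\<close>
definition kernel :: "(real \<Rightarrow> real) \<Rightarrow> complex \<Rightarrow> complex \<Rightarrow> complex" where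
  "kernel A w z =
     (let x = Re w; y = Re z in
      (complex_of_real (deriv A x) - \<i>) /
      (complex_of_real (arclen_factor A x) *
        (complex_of_real (x - y) + \<i> * complex_of_real (A x - A y))))"

definition triple :: "complex \<Rightarrow> complex \<Rightarrow> complex \<Rightarrow> nat \<Rightarrow> complex" where
  "triple z1 z2 z3 = (\<lambda>i. if i = 0 then z1 else if i = 1 then z2 else z3)"

definition symS :: "(complex \<Rightarrow> complex \<Rightarrow> complex) \<Rightarrow> complex \<Rightarrow> complex \<Rightarrow> complex \<Rightarrow> complex" where
  "symS K z1 z2 z3 =
     (let z = triple z1 z2 z3 in
      \<Sum>\<sigma> \<in> {\<sigma>. \<sigma> permutes {0,1,2::nat}}.
        K (z (\<sigma> 0)) (z (\<sigma> 1)) * cnj (K (z (\<sigma> 0)) (z (\<sigma> 2))))"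

definition menger :: "complex \<Rightarrow> complex \<Rightarrow> complex \<Rightarrow> real" where
  "menger z1 z2 z3 =
     (if collinear {z1, z2, z3} then 0
      else 1 / (THE r. \<exists>p. dist p z1 = r \<and> dist p z2 = r \<and> dist p z3 = r))"

definition ReK :: "(real \<Rightarrow> real) \<Rightarrow> complex \<Rightarrow> complex \<Rightarrow> complex" where
  "ReK A w z = complex_of_real (Re (kernel A w z))"

definition ImK :: "(real \<Rightarrow> real) \<Rightarrow> complex \<Rightarrow> complex \<Rightarrow> complex" where
  "ImK A w z = complex_of_real (Im (kernel A w z))"

end

theory Submission
  imports Defs
begin

lemma perm3_sum:
  fixes g :: "nat \<Rightarrow> nat \<Rightarrow> nat \<Rightarrow> 'b::comm_monoid_add"
  shows "(\<Sum>\<sigma>\<in>{\<sigma>. \<sigma> permutes {0,1,2::nat}}. g (\<sigma> 0) (\<sigma> 1) (\<sigma> 2))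
    = g 0 1 2 + g 0 2 1 + g 1 0 2 + g 1 2 0 + g 2 0 1 + g 2 1 0"
proof -
  let ?P = "{\<sigma>. \<sigma> permutes {0,1,2::nat}}"
  let ?T = "{(0,1,2),(0,2,1),(1,0,2),(1,2,0),(2,0,1),(2,1,0)} :: (nat \<times> nat \<times> nat) set"
  let ?h = "\<lambda>\<sigma>::nat\<Rightarrow>nat. (\<sigma> 0, \<sigma> 1, \<sigma> 2)"
  have inj: "inj_on ?h ?P"
  proof (rule inj_onI)
    fix s t assume s: "s \<in> ?P" and t: "t \<in> ?P" and e: "?h s = ?h t"
    show "s = t"
    proof
      fix x
      show "s x = t x"
      proof (cases "x \<in> {0,1,2}")
        case True then show ?thesis using e by auto
      next
        case False then show ?thesis using s t by (simp add: permutes_def)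
      qed
    qed
  qed
  have sub: "?h ` ?P \<subseteq> ?T"
  proof
    fix y assume "y \<in> ?h ` ?P"
    then obtain s where s: "s permutes {0,1,2}" and y: "y = ?h s" by auto
    have inj_s: "inj s" using s permutes_inj by blast
    have r: "s i \<in> {0,1,2}" if "i \<in> {0,1,2}" for i using permutes_in_image[OF s] that by simp
    have "s 0 \<noteq> s 1" "s 0 \<noteq> s 2" "s 1 \<noteq> s 2" by (simp_all add: inj_eq[OF inj_s])
    moreover have "s 0 = 0 \<or> s 0 = 1 \<or> s 0 = 2" "s 1 = 0 \<or> s 1 = 1 \<or> s 1 = 2"
      "s 2 = 0 \<or> s 2 = 1 \<or> s 2 = 2" using r[of 0] r[of 1] r[of 2] by auto
    ultimately show "y \<in> ?T" unfolding y by (elim disjE) simp_all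
  qed
  have cP: "card ?P = 6"
    using card_permutations[of "{0,1,2::nat}" 3] by (simp add: fact_numeral)
  have cT: "card ?T = 6" by simp
  have eq: "?h ` ?P = ?T"
  proof (rule card_subset_eq[OF _ sub])
    show "finite ?T" by simp
    show "card (?h ` ?P) = card ?T" using card_image[OF inj] cP cT by simp
  qed
  have "(\<Sum>\<sigma>\<in>?P. g (\<sigma> 0) (\<sigma> 1) (\<sigma> 2)) = (\<Sum>(i,j,k)\<in>?h ` ?P. g i j k)"
    by (subst sum.reindex[OF inj]) (simp add: case_prod_beta)
  also have "\<dots> = (\<Sum>(i,j,k)\<in>?T. g i j k)" using eq by simp
  also have "\<dots> = g 0 1 2 + g 0 2 1 + g 1 0 2 + g 1 2 0 + g 2 0 1 + g 2 1 0"
    by (simp add: ac_simps)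
  finally show ?thesis .
qed

definition d1 :: "(real \<Rightarrow> real) \<Rightarrow> real \<Rightarrow> real \<Rightarrow> real" where
  "d1 h a b = (h a - h b) / (a - b)"
definition d2 :: "(real \<Rightarrow> real) \<Rightarrow> real \<Rightarrow> real \<Rightarrow> real \<Rightarrow> real" where
  "d2 h a b c = (d1 h a b - d1 h b c) / (a - c)"

lemma d1_sym: "d1 h a b = d1 h b a"
  unfolding d1_def by (cases "a = b") (simp_all add: field_simps)

lemma d2_formula_aux0:
  fixes p r s x y z :: real
  assumes "p \<noteq> 0" "r \<noteq> 0" "s \<noteq> 0" "s = p + r"
  shows "((x - y) / p - (y - z) / r) / s = x / (p * s) + y / ((- p) * r) + z / ((- s) * (- r))"
  using assms(1-3) apply (simp add: field_simps) apply (simp add: assms(4) algebra_simps) done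

lemma d2_formula_aux:
  fixes p r x y z :: real
  assumes "p \<noteq> 0" "r \<noteq> 0" "p + r \<noteq> 0"
  shows "((x - y) / p - (y - z) / r) / (p + r) = x / (p * (p + r)) + y / ((- p) * r) + z / ((- (p + r)) * (- r))"
  using d2_formula_aux0[OF assms refl] .

lemma pc_aux0:
  fixes p r s x y z :: real
  assumes "p \<noteq> 0" "r \<noteq> 0" "s \<noteq> 0" "s = p + r"
  shows "z - x - (x - y) / p * (- s) -
       (x / (p * s) + y / (- p * r) + z / ((- s) * (- r))) * ((- s) * (- r)) = 0"
  using assms(1-3) apply (simp add: field_simps) apply (simp add: assms(4) algebra_simps) done

lemma pc_aux:
  fixes p r x y z :: real
  assumes "p \<noteq> 0" "r \<noteq> 0" "p + r \<noteq> 0"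
  shows "z - x - (x - y) / p * (- (p + r)) -
       (x / (p * (p + r)) + y / (- p * r) + z / ((- (p + r)) * (- r))) * ((- (p + r)) * (- r)) = 0"
  using pc_aux0[OF assms refl] .

lemma d2_formula: "a \<noteq> b \<Longrightarrow> a \<noteq> c \<Longrightarrow> b \<noteq> c \<Longrightarrow>
  d2 h a b c = h a / ((a - b) * (a - c)) + h b / ((b - a) * (b - c)) + h c / ((c - a) * (c - b))"
proof -
  assume "a \<noteq> b" "a \<noteq> c" "b \<noteq> c"
  obtain p r where pr: "a - b = p" "b - c = r" by blast
  have e: "b - a = - p" "c - a = - (p + r)" "c - b = - r" "a - c = p + r" using pr by auto
  show ?thesis unfolding d2_def d1_def e pr
    by (rule d2_formula_aux) (use \<open>a \<noteq> b\<close> \<open>a \<noteq> c\<close> \<open>b \<noteq> c\<close> pr e in auto)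
qed

lemma d2_sym1: "a \<noteq> b \<Longrightarrow> a \<noteq> c \<Longrightarrow> b \<noteq> c \<Longrightarrow> d2 h a b c = d2 h b a c"
  by (simp add: d2_formula ac_simps)

lemma d2_sym2: "a \<noteq> b \<Longrightarrow> a \<noteq> c \<Longrightarrow> b \<noteq> c \<Longrightarrow> d2 h a b c = d2 h a c b"
  by (simp add: d2_formula ac_simps)

lemma d1_mvt:
  assumes "a \<noteq> b" "is_interval S" "a \<in> S" "b \<in> S"
    and der: "\<And>x. x \<in> S \<Longrightarrow> (h has_real_derivative h1 x) (at x)"
  shows "\<exists>\<eta>. min a b < \<eta> \<and> \<eta> < max a b \<and> d1 h a b = h1 \<eta>"
proof -
  have main: "\<exists>\<eta>. a < \<eta> \<and> \<eta> < b \<and> d1 h a b = h1 \<eta>"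
    if "a < b" "a \<in> S" "b \<in> S" for a b
  proof -
    have "\<And>x. a \<le> x \<Longrightarrow> x \<le> b \<Longrightarrow> DERIV h x :> h1 x"
      using der \<open>is_interval S\<close> that unfolding is_interval_1 by blast
    from MVT2[OF \<open>a < b\<close> this] obtain z where "a < z" "z < b" "h b - h a = (b - a) * h1 z"
      by blast
    then show ?thesis using \<open>a < b\<close> unfolding d1_def by (intro exI[of _ z]) (simp add: field_simps)
  qed
  show ?thesis
  proof (cases "a < b")
    case True then show ?thesis using main[of a b] assms by auto
  next
    case False then have "b < a" using assms(1) by simp
    then show ?thesis using main[of b a] assms d1_sym[of h a b] by auto
  qed
qed

lemma d2_rolle_ord:
  assumes "a < b" "b < c"
    and der: "\<And>x. a \<le> x \<Longrightarrow> x \<le> c \<Longrightarrow> (h has_real_derivative h1 x) (at x)"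
    and der2: "\<And>x. a \<le> x \<Longrightarrow> x \<le> c \<Longrightarrow> (h1 has_real_derivative h2 x) (at x)"
  shows "\<exists>\<xi>. a < \<xi> \<and> \<xi> < c \<and> d2 h a b c = h2 \<xi> / 2"
proof -
  define D where "D = d2 h a b c"
  define L where "L = d1 h a b"
  define \<phi> where "\<phi> t = h t - h a - L * (t - a) - D * ((t - a) * (t - b))" for t
  define \<phi>1 where "\<phi>1 t = h1 t - L - D * (2 * t - a - b)" for t
  have dphi: "DERIV \<phi> t :> \<phi>1 t" if "a \<le> t" "t \<le> c" for t
    unfolding \<phi>_def \<phi>1_def
    by (rule derivative_eq_intros der[OF that] refl | simp add: algebra_simps)+
  have dphi1: "DERIV \<phi>1 t :> h2 t - 2 * D" if "a \<le> t" "t \<le> c" for t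
    unfolding \<phi>1_def
    by (rule derivative_eq_intros der2[OF that] refl | simp)+
  have pa: "\<phi> a = 0" unfolding \<phi>_def by simp
  have pb: "\<phi> b = 0" using assms unfolding \<phi>_def L_def d1_def by (simp add: field_simps)
  have pc: "\<phi> c = 0"
  proof -
    have ne: "a - b \<noteq> 0" "a - c \<noteq> 0" "b - c \<noteq> 0" using assms by auto
    have "\<phi> c = h c - h a - (h a - h b) / (a - b) * (c - a) -
       (h a / ((a - b) * (a - c)) + h b / (- (a - b) * (b - c)) + h c / ((- (a - c)) * (- (b - c)))) * ((c - a) * (c - b))"
      unfolding \<phi>_def L_def D_def d1_def d2_formula[OF ne[simplified]]
      by (simp add: algebra_simps)
    also have "\<dots> = 0"
    proof -
      obtain p r where pr: "a - b = p" "b - c = r" by blast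
      have e: "b - a = - p" "c - a = - (p + r)" "c - b = - r" "a - c = p + r" using pr by auto
      show ?thesis unfolding e pr
        by (rule pc_aux) (use ne pr e in auto)
    qed
    finally show ?thesis .
  qed
  obtain z1 where z1: "a < z1" "z1 < b" "\<phi> b - \<phi> a = (b - a) * \<phi>1 z1"
    using MVT2[of a b \<phi> \<phi>1] dphi assms by force
  obtain z2 where z2: "b < z2" "z2 < c" "\<phi> c - \<phi> b = (c - b) * \<phi>1 z2"
    using MVT2[of b c \<phi> \<phi>1] dphi assms by force
  have e1: "\<phi>1 z1 = 0" "\<phi>1 z2 = 0" using z1 z2 pa pb pc assms by auto
  obtain \<xi> where xi: "z1 < \<xi>" "\<xi> < z2" "\<phi>1 z2 - \<phi>1 z1 = (z2 - z1) * (h2 \<xi> - 2 * D)"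
    using MVT2[of z1 z2 \<phi>1 "\<lambda>t. h2 t - 2 * D"] dphi1 z1 z2 by force
  have "h2 \<xi> - 2 * D = 0" using xi e1 z1 z2 by simp
  then show ?thesis using xi z1 z2 unfolding D_def by (intro exI[of _ \<xi>]) auto
qed

lemma d2_mvt_S_ord:
  assumes "a < b" "b < c" "is_interval S" "a \<in> S" "c \<in> S"
    and der: "\<And>x. x \<in> S \<Longrightarrow> (h has_real_derivative h1 x) (at x)"
    and der2: "\<And>x. x \<in> S \<Longrightarrow> (h1 has_real_derivative h2 x) (at x)"
  shows "\<exists>\<xi>\<in>S. d2 h a b c = h2 \<xi> / 2"
proof -
  have inS: "x \<in> S" if "a \<le> x" "x \<le> c" for x
    using assms that unfolding is_interval_1 by blast
  obtain \<xi> where "a < \<xi>" "\<xi> < c" "d2 h a b c = h2 \<xi> / 2"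
    using d2_rolle_ord[OF assms(1,2), of h h1 h2] der der2 inS by blast
  then show ?thesis using inS[of \<xi>] by auto
qed

lemma d2_mvt:
  assumes "a \<noteq> b" "a \<noteq> c" "b \<noteq> c" "is_interval S" "a \<in> S" "b \<in> S" "c \<in> S"
    and der: "\<And>x. x \<in> S \<Longrightarrow> (h has_real_derivative h1 x) (at x)"
    and der2: "\<And>x. x \<in> S \<Longrightarrow> (h1 has_real_derivative h2 x) (at x)"
  shows "\<exists>\<xi>\<in>S. d2 h a b c = h2 \<xi> / 2"
proof -
  note M = d2_mvt_S_ord[OF _ _ \<open>is_interval S\<close> _ _ der der2]
  have s1: "d2 h a b c = d2 h b a c" using assms d2_sym1 by blast
  have s2: "d2 h a b c = d2 h a c b" using assms d2_sym2 by blast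
  have s3: "d2 h a b c = d2 h c b a"
    using assms d2_sym1 d2_sym2 by metis
  have s4: "d2 h a b c = d2 h b c a"
    using assms d2_sym1 d2_sym2 by metis
  have s5: "d2 h a b c = d2 h c a b"
    using assms d2_sym1 d2_sym2 by metis
  consider "a < b" "b < c" | "a < c" "c < b" | "b < a" "a < c" | "b < c" "c < a" | "c < a" "a < b" | "c < b" "b < a"
    using assms(1-3) by linarith
  then show ?thesis
  proof cases
    case 1 then show ?thesis using M[of a b c] assms by auto
  next
    case 2 then show ?thesis using M[of a c b] assms s2 by auto
  next
    case 3 then show ?thesis using M[of b a c] assms s1 by auto
  next
    case 4 then show ?thesis using M[of b c a] assms s4 by auto
  next
    case 5 then show ?thesis using M[of c a b] assms s5 by auto
  next
    case 6 then show ?thesis using M[of c b a] assms s3 by auto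
  qed
qed

lemma tendsto_d1:
  assumes "open J" "x0 \<in> J"
    and der: "\<And>x. x \<in> J \<Longrightarrow> (h has_real_derivative h1 x) (at x)"
    and cont: "isCont h1 x0"
    and fa: "(fa \<longlongrightarrow> x0) F" and fb: "(fb \<longlongrightarrow> x0) F"
    and ne: "eventually (\<lambda>p. fa p \<noteq> fb p) F"
  shows "((\<lambda>p. d1 h (fa p) (fb p)) \<longlongrightarrow> h1 x0) F"
proof (rule tendstoI)
  fix e :: real assume "e > 0"
  obtain d1' where d1': "d1' > 0" "\<And>y. dist y x0 < d1' \<Longrightarrow> dist (h1 y) (h1 x0) < e"
    using cont \<open>e > 0\<close> unfolding continuous_at_eps_delta by blast
  obtain d2' where d2': "d2' > 0" "ball x0 d2' \<subseteq> J"
    using assms(1,2) open_contains_ball by blast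
  define d where "d = min d1' d2'"
  have "d > 0" using d1' d2' d_def by simp
  have ev: "eventually (\<lambda>p. dist (fa p) x0 < d \<and> dist (fb p) x0 < d \<and> fa p \<noteq> fb p) F"
    using tendstoD[OF fa \<open>d > 0\<close>] tendstoD[OF fb \<open>d > 0\<close>] ne by eventually_elim auto
  show "eventually (\<lambda>p. dist (d1 h (fa p) (fb p)) (h1 x0) < e) F"
    using ev
  proof eventually_elim
    case (elim p)
    have sub: "ball x0 d \<subseteq> J" using d2' d_def by auto
    have "fa p \<in> ball x0 d" "fb p \<in> ball x0 d" using elim by (auto simp: dist_commute)
    then obtain \<eta> where \<eta>: "min (fa p) (fb p) < \<eta>" "\<eta> < max (fa p) (fb p)" "d1 h (fa p) (fb p) = h1 \<eta>"
      using d1_mvt[OF _ is_interval_ball_real, of "fa p" "fb p" x0 d h h1] elim der sub by blast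
    have "\<eta> \<in> ball x0 d"
      using \<open>fa p \<in> ball x0 d\<close> \<open>fb p \<in> ball x0 d\<close> \<eta>(1,2) is_interval_ball_real[of x0 d]
      unfolding is_interval_1 by (metis less_imp_le max_def min_def)
    then have "dist \<eta> x0 < d1'" using d_def by (simp add: dist_commute)
    then show ?case using d1'(2) \<eta>(3) by simp
  qed
qed

lemma tendsto_d2:
  assumes "open J" "x0 \<in> J"
    and der: "\<And>x. x \<in> J \<Longrightarrow> (h has_real_derivative h1 x) (at x)"
    and der2: "\<And>x. x \<in> J \<Longrightarrow> (h1 has_real_derivative h2 x) (at x)"
    and cont: "isCont h2 x0"
    and fa: "(fa \<longlongrightarrow> x0) F" and fb: "(fb \<longlongrightarrow> x0) F" and fc: "(fc \<longlongrightarrow> x0) F"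
    and ne: "eventually (\<lambda>p. fa p \<noteq> fb p \<and> fa p \<noteq> fc p \<and> fb p \<noteq> fc p) F"
  shows "((\<lambda>p. d2 h (fa p) (fb p) (fc p)) \<longlongrightarrow> h2 x0 / 2) F"
proof (rule tendstoI)
  fix e :: real assume "e > 0"
  obtain d1' where d1': "d1' > 0" "\<And>y. dist y x0 < d1' \<Longrightarrow> dist (h2 y) (h2 x0) < e"
    using cont \<open>e > 0\<close> unfolding continuous_at_eps_delta by blast
  obtain d2' where d2': "d2' > 0" "ball x0 d2' \<subseteq> J"
    using assms(1,2) open_contains_ball by blast
  define d where "d = min d1' d2'"
  have "d > 0" using d1' d2' d_def by simp
  have ev: "eventually (\<lambda>p. dist (fa p) x0 < d \<and> dist (fb p) x0 < d \<and> dist (fc p) x0 < d \<and>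
      fa p \<noteq> fb p \<and> fa p \<noteq> fc p \<and> fb p \<noteq> fc p) F"
    using tendstoD[OF fa \<open>d > 0\<close>] tendstoD[OF fb \<open>d > 0\<close>] tendstoD[OF fc \<open>d > 0\<close>] ne
    by eventually_elim auto
  show "eventually (\<lambda>p. dist (d2 h (fa p) (fb p) (fc p)) (h2 x0 / 2) < e) F"
    using ev
  proof eventually_elim
    case (elim p)
    have sub: "ball x0 d \<subseteq> J" using d2' d_def by auto
    have "fa p \<in> ball x0 d" "fb p \<in> ball x0 d" "fc p \<in> ball x0 d" using elim by (auto simp: dist_commute)
    then obtain \<xi> where \<xi>: "\<xi> \<in> ball x0 d" "d2 h (fa p) (fb p) (fc p) = h2 \<xi> / 2"
      using d2_mvt[OF _ _ _ is_interval_ball_real, of "fa p" "fb p" "fc p" x0 d h h1 h2] elim der der2 sub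
      by blast
    then have "dist \<xi> x0 < d1'" using d_def by (simp add: dist_commute)
    then have "dist (h2 \<xi>) (h2 x0) < e" using d1'(2) by simp
    then show ?case using \<xi>(2) \<open>e > 0\<close> by (simp add: dist_real_def)
  qed
qed

definition crossD :: "complex \<Rightarrow> complex \<Rightarrow> real" where
  "crossD u v = Re u * Im v - Im u * Re v"

lemma collinear_crossD:
  assumes "collinear {z1, z2, z3}"
  shows "crossD (z2 - z1) (z3 - z1) = 0"
proof -
  obtain w where w: "\<forall>x\<in>{z1,z2,z3}. \<forall>y\<in>{z1,z2,z3}. \<exists>c. x - y = c *\<^sub>R w"
    using assms unfolding collinear_def by blast
  obtain c1 where c1: "z2 - z1 = c1 *\<^sub>R w" using w by blast
  obtain c2 where c2: "z3 - z1 = c2 *\<^sub>R w" using w by blast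
  show ?thesis unfolding crossD_def c1 c2 by (simp add: algebra_simps)
qed

lemma Re_inv_mult_cnj:
  "Re (1 / (a * cnj b)) = (Re a * Re b + Im a * Im b) / ((Re a ^ 2 + Im a ^ 2) * (Re b ^ 2 + Im b ^ 2))"
proof -
  have gen: "Re (1 / w) = Re w / (cmod w)^2" for w :: complex
    by (simp add: Re_divide cmod_power2)
  have "Re (1 / (a * cnj b)) = Re (a * cnj b) / (cmod (a * cnj b))^2"
    by (rule gen)
  also have "(cmod (a * cnj b))^2 = (Re a ^ 2 + Im a ^ 2) * (Re b ^ 2 + Im b ^ 2)"
    by (simp add: norm_mult power_mult_distrib cmod_power2)
  also have "Re (a * cnj b) = Re a * Re b + Im a * Im b" by simp
  finally show ?thesis .
qed

lemma melnikov_poly: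
  fixes u1 u2 v1 v2 :: real
  shows "2 * ((u1 * v1 + u2 * v2) * ((v1 - u1)^2 + (v2 - u2)^2) + ((- u1) * (v1 - u1) + (- u2) * (v2 - u2)) * (v1^2 + v2^2)
     + ((- v1) * (u1 - v1) + (- v2) * (u2 - v2)) * (u1^2 + u2^2)) = 4 * (u1 * v2 - u2 * v1)^2"
  by (simp add: power2_eq_square algebra_simps)

lemma melnikov_real:
  fixes u1 u2 v1 v2 N1 N2 N3 :: real
  assumes "N1 \<noteq> 0" "N2 \<noteq> 0" "N3 \<noteq> 0"
    and "N1 = u1^2 + u2^2" "N2 = v1^2 + v2^2" "N3 = (v1 - u1)^2 + (v2 - u2)^2"
  shows "2 * ((u1 * v1 + u2 * v2) / (N1 * N2) + ((- u1) * (v1 - u1) + (- u2) * (v2 - u2)) / (N1 * N3)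
     + ((- v1) * (u1 - v1) + (- v2) * (u2 - v2)) / (N2 * N3))
     = 4 * (u1 * v2 - u2 * v1)^2 / (N1 * N2 * N3)"
proof -
  have "2 * ((u1 * v1 + u2 * v2) / (N1 * N2) + ((- u1) * (v1 - u1) + (- u2) * (v2 - u2)) / (N1 * N3)
     + ((- v1) * (u1 - v1) + (- v2) * (u2 - v2)) / (N2 * N3))
     = 2 * ((u1 * v1 + u2 * v2) * N3 + ((- u1) * (v1 - u1) + (- u2) * (v2 - u2)) * N2
     + ((- v1) * (u1 - v1) + (- v2) * (u2 - v2)) * N1) / (N1 * N2 * N3)"
    using assms(1-3) by (simp add: field_simps)
  also have "\<dots> = 4 * (u1 * v2 - u2 * v1)^2 / (N1 * N2 * N3)"
    unfolding assms(4-6) melnikov_poly ..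
  finally show ?thesis .
qed

lemma circum_poly:
  fixes u1 u2 v1 v2 :: real
  shows "((u1^2+u2^2) * v2 - (v1^2+v2^2) * u2)^2 + (u1 * (v1^2+v2^2) - v1 * (u1^2+u2^2))^2
    = (u1^2+u2^2) * (v1^2+v2^2) * ((v1 - u1)^2 + (v2 - u2)^2)"
  by (simp add: power2_eq_square algebra_simps)

lemma menger_sq:
  assumes D0: "crossD (z2 - z1) (z3 - z1) \<noteq> 0"
  shows "(menger z1 z2 z3)^2 = 4 * (crossD (z2 - z1) (z3 - z1))^2 /
     ((cmod (z2 - z1))^2 * (cmod (z3 - z1))^2 * (cmod (z3 - z2))^2)"
proof -
  define u where "u = z2 - z1"
  define v where "v = z3 - z1"
  define D where "D = crossD u v"
  have "D \<noteq> 0" using D0 unfolding D_def u_def v_def .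
  have ncol: "\<not> collinear {z1, z2, z3}" using D0 collinear_crossD by blast
  define u1 where "u1 = Re u"
  define u2 where "u2 = Im u"
  define v1 where "v1 = Re v"
  define v2 where "v2 = Im v"
  define Nu where "Nu = u1^2 + u2^2"
  define Nv where "Nv = v1^2 + v2^2"
  have Dd: "D = u1 * v2 - u2 * v1" unfolding D_def crossD_def u1_def u2_def v1_def v2_def by simp
  define X where "X = (Nu * v2 - Nv * u2) / (2 * D)"
  define Y where "Y = (u1 * Nv - v1 * Nu) / (2 * D)"
  define q0 where "q0 = Complex X Y"
  have eqX: "2 * (X * u1 + Y * u2) = Nu" unfolding X_def Y_def using \<open>D \<noteq> 0\<close>
    by (simp add: field_simps) (simp add: Dd algebra_simps)
  have eqY: "2 * (X * v1 + Y * v2) = Nv" unfolding X_def Y_def using \<open>D \<noteq> 0\<close>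
    by (simp add: field_simps) (simp add: Dd algebra_simps)
  have cm: "(cmod (q - w))^2 = (cmod q)^2 \<longleftrightarrow> 2 * (Re q * Re w + Im q * Im w) = (Re w)^2 + (Im w)^2"
    for q w :: complex
    unfolding cmod_power2 by (simp add: power2_eq_square algebra_simps) (simp add: eq_commute)
  have cmeq: "cmod a = cmod b \<longleftrightarrow> (cmod a)^2 = (cmod b)^2" for a b :: complex
    by (metis norm_ge_zero power2_eq_iff_nonneg)
  have dist_eq: "dist p z1 = cmod (p - z1)" "dist p z2 = cmod ((p - z1) - u)" "dist p z3 = cmod ((p - z1) - v)"
    for p unfolding u_def v_def dist_complex_def by (simp_all add: algebra_simps)
  have ex: "dist (z1 + q0) z1 = cmod q0 \<and> dist (z1 + q0) z2 = cmod q0 \<and> dist (z1 + q0) z3 = cmod q0"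
  proof -
    have a1: "cmod (q0 - u) = cmod q0" unfolding cmeq cm unfolding q0_def using eqX
      by (simp add: u1_def u2_def v1_def v2_def Nu_def Nv_def)
    have a2: "cmod (q0 - v) = cmod q0" unfolding cmeq cm unfolding q0_def using eqY
      by (simp add: u1_def u2_def v1_def v2_def Nu_def Nv_def)
    show ?thesis unfolding dist_eq using a1 a2 by simp
  qed
  have uniq: "r = cmod q0" if exr: "\<exists>p. dist p z1 = r \<and> dist p z2 = r \<and> dist p z3 = r" for r
  proof -
    obtain p where p: "dist p z1 = r" "dist p z2 = r" "dist p z3 = r" using exr by blast
    define q where "q = p - z1"
    have "cmod (q - u) = cmod q" "cmod (q - v) = cmod q" using p unfolding dist_eq q_def by simp_all
    then have e1: "2 * (Re q * u1 + Im q * u2) = Nu" and e2: "2 * (Re q * v1 + Im q * v2) = Nv"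
      unfolding cmeq cm by (simp_all add: u1_def u2_def v1_def v2_def Nu_def Nv_def)
    have "2 * D * Re q = v2 * (2 * (Re q * u1 + Im q * u2)) - u2 * (2 * (Re q * v1 + Im q * v2))"
      unfolding Dd by (simp add: algebra_simps)
    then have "2 * D * Re q = Nu * v2 - Nv * u2" unfolding e1 e2 by simp
    then have rq: "Re q = X" unfolding X_def using \<open>D \<noteq> 0\<close> by (simp add: field_simps)
    have "2 * D * Im q = u1 * (2 * (Re q * v1 + Im q * v2)) - v1 * (2 * (Re q * u1 + Im q * u2))"
      unfolding Dd by (simp add: algebra_simps)
    then have "2 * D * Im q = u1 * Nv - v1 * Nu" unfolding e1 e2 by simp
    then have iq: "Im q = Y" unfolding Y_def using \<open>D \<noteq> 0\<close> by (simp add: field_simps)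
    have "q = q0" unfolding q0_def using rq iq by (simp add: complex_eq_iff)
    then show ?thesis using p(1) unfolding dist_eq q_def by simp
  qed
  have the_r: "(THE r. \<exists>p. dist p z1 = r \<and> dist p z2 = r \<and> dist p z3 = r) = cmod q0"
    by (rule the_equality) (use ex uniq in blast)+
  have m: "menger z1 z2 z3 = 1 / cmod q0" unfolding menger_def the_r using ncol by simp
  have "(cmod q0)^2 = X^2 + Y^2" unfolding q0_def by (simp add: cmod_power2)
  also have "\<dots> = ((Nu * v2 - Nv * u2)^2 + (u1 * Nv - v1 * Nu)^2) / (4 * D^2)"
    unfolding X_def Y_def by (simp add: power_divide power_mult_distrib add_divide_distrib)
  also have "\<dots> = Nu * Nv * ((v1 - u1)^2 + (v2 - u2)^2) / (4 * D^2)"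
    unfolding Nu_def Nv_def circum_poly ..
  finally have cq: "(cmod q0)^2 = Nu * Nv * ((v1 - u1)^2 + (v2 - u2)^2) / (4 * D^2)" .
  have n1: "(cmod u)^2 = Nu" "(cmod v)^2 = Nv" "(cmod (z3 - z2))^2 = (v1 - u1)^2 + (v2 - u2)^2"
    unfolding Nu_def Nv_def u1_def u2_def v1_def v2_def u_def v_def by (simp_all add: cmod_power2)
  show ?thesis unfolding m cq power_one_over
    by (simp flip: u_def v_def D_def add: n1)
qed

definition gam :: "(real \<Rightarrow> real) \<Rightarrow> real \<Rightarrow> complex" where
  "gam A x = Complex x (A x)"

definition fr :: "(real \<Rightarrow> real) \<Rightarrow> real \<Rightarrow> real" where
  "fr A x = (1 - (deriv A x)^2) / (1 + (deriv A x)^2)"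
definition fi :: "(real \<Rightarrow> real) \<Rightarrow> real \<Rightarrow> real" where
  "fi A x = 2 * deriv A x / (1 + (deriv A x)^2)"

lemma kernel_gam:
  "kernel A (gam A x) (gam A y) =
     (complex_of_real (deriv A x) - \<i>) / (complex_of_real (arclen_factor A x) * (gam A x - gam A y))"
proof -
  have "complex_of_real (x - y) + \<i> * complex_of_real (A x - A y) = gam A x - gam A y"
    unfolding gam_def by (simp add: complex_eq_iff)
  then show ?thesis unfolding kernel_def Let_def by (simp add: gam_def)
qed

lemma arclen_pos: "arclen_factor A x > 0"
  unfolding arclen_factor_def by (simp add: add_pos_nonneg)

lemma arclen_sq: "(arclen_factor A x)^2 = 1 + (deriv A x)^2"
  unfolding arclen_factor_def by (simp add: add_nonneg_nonneg)

lemma cancel_aux: "(c::complex) \<noteq> 0 \<Longrightarrow> c / (c * d) = 1 / d"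
  by (cases "d = 0") (simp_all add: field_simps)

lemma cancel_aux2: "(c::complex) \<noteq> 0 \<Longrightarrow> (e * c) / (c * d) = e / d"
  by (cases "d = 0") (simp_all add: field_simps)

lemma kk_cnj:
  assumes "gam A x \<noteq> gam A y" "gam A x \<noteq> gam A w"
  shows "kernel A (gam A x) (gam A y) * cnj (kernel A (gam A x) (gam A w)) =
    1 / ((gam A x - gam A y) * cnj (gam A x - gam A w))"
proof -
  define a where "a = deriv A x"
  define s where "s = arclen_factor A x"
  have s0: "complex_of_real s \<noteq> 0" using arclen_pos[of A x] s_def by simp
  have ss: "(complex_of_real a - \<i>) * (complex_of_real a + \<i>) = complex_of_real s * complex_of_real s"
  proof -
    have "s * s = 1 + a^2" using arclen_sq[of A x] unfolding s_def a_def by (simp add: power2_eq_square)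
    then have "complex_of_real s * complex_of_real s = complex_of_real (1 + a^2)"
      by (metis of_real_mult)
    then show ?thesis by (simp add: complex_eq_iff power2_eq_square)
  qed
  have d1: "gam A x - gam A y \<noteq> 0" "cnj (gam A x - gam A w) \<noteq> 0" using assms by auto
  have "kernel A (gam A x) (gam A y) * cnj (kernel A (gam A x) (gam A w)) =
     ((complex_of_real a - \<i>) * (complex_of_real a + \<i>)) /
      ((complex_of_real s * complex_of_real s) * ((gam A x - gam A y) * cnj (gam A x - gam A w)))"
    unfolding kernel_gam a_def[symmetric] s_def[symmetric]
    by (simp add: complex_cnj_divide complex_cnj_mult algebra_simps)
  also have "\<dots> = 1 / ((gam A x - gam A y) * cnj (gam A x - gam A w))"
    unfolding ss using s0 by (intro cancel_aux) simp
  finally show ?thesis .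
qed

lemma kk_sq:
  assumes "gam A x \<noteq> gam A y" "gam A x \<noteq> gam A w"
  shows "kernel A (gam A x) (gam A y) * kernel A (gam A x) (gam A w) =
    - Complex (fr A x) (fi A x) / ((gam A x - gam A y) * (gam A x - gam A w))"
proof -
  define a where "a = deriv A x"
  define s where "s = arclen_factor A x"
  have s0: "complex_of_real s \<noteq> 0" using arclen_pos[of A x] s_def by simp
  have pa: "1 + a^2 > 0" by (simp add: add_pos_nonneg)
  have ss: "(complex_of_real a - \<i>) * (complex_of_real a - \<i>) = - Complex (fr A x) (fi A x) * (complex_of_real s * complex_of_real s)"
  proof -
    have "s * s = 1 + a^2" using arclen_sq[of A x] unfolding s_def a_def by (simp add: power2_eq_square)
    then have cs: "complex_of_real s * complex_of_real s = complex_of_real (1 + a^2)"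
      by (metis of_real_mult)
    have e1: "fr A x * (1 + a^2) = 1 - a^2" unfolding fr_def a_def[symmetric] using pa by simp
    have e2: "fi A x * (1 + a^2) = 2 * a" unfolding fi_def a_def[symmetric] using pa by simp
    show ?thesis unfolding cs using e1 e2
      by (simp add: complex_eq_iff power2_eq_square algebra_simps)
  qed
  have d1: "gam A x - gam A y \<noteq> 0" "gam A x - gam A w \<noteq> 0" using assms by auto
  have "kernel A (gam A x) (gam A y) * kernel A (gam A x) (gam A w) =
     ((complex_of_real a - \<i>) * (complex_of_real a - \<i>)) /
      ((complex_of_real s * complex_of_real s) * ((gam A x - gam A y) * (gam A x - gam A w)))"
    unfolding kernel_gam a_def[symmetric] s_def[symmetric]
    by (simp add: algebra_simps)
  also have "\<dots> = - Complex (fr A x) (fi A x) / ((gam A x - gam A y) * (gam A x - gam A w))"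
    unfolding ss using s0 by (intro cancel_aux2) simp
  finally show ?thesis .
qed

lemma symS_expand:
  "symS K z1 z2 z3 = K z1 z2 * cnj (K z1 z3) + K z1 z3 * cnj (K z1 z2) + K z2 z1 * cnj (K z2 z3)
     + K z2 z3 * cnj (K z2 z1) + K z3 z1 * cnj (K z3 z2) + K z3 z2 * cnj (K z3 z1)"
  unfolding symS_def Let_def
  using perm3_sum[of "\<lambda>i j l. K (triple z1 z2 z3 i) (triple z1 z2 z3 j) * cnj (K (triple z1 z2 z3 i) (triple z1 z2 z3 l))"]
  by (simp add: triple_def)

lemma re_pair: "Re p * Re q = (Re (p * cnj q) + Re (p * q)) / 2"
  by (simp add: algebra_simps)
lemma im_pair: "Im p * Im q = (Re (p * cnj q) - Re (p * q)) / 2"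
  by (simp add: algebra_simps)

lemma melnikov:
  fixes z1 z2 z3 :: complex
  assumes "z1 \<noteq> z2" "z1 \<noteq> z3" "z2 \<noteq> z3"
  shows "Re (1 / ((z1 - z2) * cnj (z1 - z3)) + 1 / ((z1 - z3) * cnj (z1 - z2))
     + 1 / ((z2 - z1) * cnj (z2 - z3)) + 1 / ((z2 - z3) * cnj (z2 - z1))
     + 1 / ((z3 - z1) * cnj (z3 - z2)) + 1 / ((z3 - z2) * cnj (z3 - z1)))
   = 4 * (crossD (z2 - z1) (z3 - z1))^2 / ((cmod (z2 - z1))^2 * (cmod (z3 - z1))^2 * (cmod (z3 - z2))^2)"
proof -
  define x1 where "x1 = Re z1"
  define x2 where "x2 = Re z2"
  define x3 where "x3 = Re z3"
  define y1 where "y1 = Im z1"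
  define y2 where "y2 = Im z2"
  define y3 where "y3 = Im z3"
  define u1 where "u1 = x2 - x1"
  define u2 where "u2 = y2 - y1"
  define v1 where "v1 = x3 - x1"
  define v2 where "v2 = y3 - y1"
  define N1 where "N1 = u1^2 + u2^2"
  define N2 where "N2 = v1^2 + v2^2"
  define N3 where "N3 = (v1 - u1)^2 + (v2 - u2)^2"
  have N1: "N1 \<noteq> 0" unfolding N1_def u1_def u2_def x1_def x2_def y1_def y2_def
    using assms(1) by (auto simp add: complex_eq_iff sum_power2_eq_zero_iff)
  have N2: "N2 \<noteq> 0" unfolding N2_def v1_def v2_def x1_def x3_def y1_def y3_def
    using assms(2) by (auto simp add: complex_eq_iff sum_power2_eq_zero_iff)
  have N3: "N3 \<noteq> 0" unfolding N3_def v1_def v2_def u1_def u2_def x1_def x2_def x3_def y1_def y2_def y3_def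
    using assms(3) by (auto simp add: complex_eq_iff sum_power2_eq_zero_iff)
  note mr = melnikov_real[OF N1 N2 N3 N1_def N2_def N3_def]
  have fr: "p1 = q1 \<Longrightarrow> p2 = q2 \<Longrightarrow> p1 / p2 = q1 / q2" for p1 p2 q1 q2 :: real by simp
  have t1: "Re (1 / ((z1 - z2) * cnj (z1 - z3))) = (u1 * v1 + u2 * v2) / (N1 * N2)"
    unfolding Re_inv_mult_cnj N1_def N2_def u1_def u2_def v1_def v2_def x1_def x2_def x3_def y1_def y2_def y3_def
    by (rule fr) (simp_all add: power2_eq_square algebra_simps)
  have t2: "Re (1 / ((z1 - z3) * cnj (z1 - z2))) = (u1 * v1 + u2 * v2) / (N1 * N2)"
    unfolding Re_inv_mult_cnj N1_def N2_def u1_def u2_def v1_def v2_def x1_def x2_def x3_def y1_def y2_def y3_def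
    by (rule fr) (simp_all add: power2_eq_square algebra_simps)
  have t3: "Re (1 / ((z2 - z1) * cnj (z2 - z3))) = ((- u1) * (v1 - u1) + (- u2) * (v2 - u2)) / (N1 * N3)"
    unfolding Re_inv_mult_cnj N1_def N3_def u1_def u2_def v1_def v2_def x1_def x2_def x3_def y1_def y2_def y3_def
    by (rule fr) (simp_all add: power2_eq_square algebra_simps)
  have t4: "Re (1 / ((z2 - z3) * cnj (z2 - z1))) = ((- u1) * (v1 - u1) + (- u2) * (v2 - u2)) / (N1 * N3)"
    unfolding Re_inv_mult_cnj N1_def N3_def u1_def u2_def v1_def v2_def x1_def x2_def x3_def y1_def y2_def y3_def
    by (rule fr) (simp_all add: power2_eq_square algebra_simps)
  have t5: "Re (1 / ((z3 - z1) * cnj (z3 - z2))) = ((- v1) * (u1 - v1) + (- v2) * (u2 - v2)) / (N2 * N3)"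
    unfolding Re_inv_mult_cnj N2_def N3_def u1_def u2_def v1_def v2_def x1_def x2_def x3_def y1_def y2_def y3_def
    by (rule fr) (simp_all add: power2_eq_square algebra_simps)
  have t6: "Re (1 / ((z3 - z2) * cnj (z3 - z1))) = ((- v1) * (u1 - v1) + (- v2) * (u2 - v2)) / (N2 * N3)"
    unfolding Re_inv_mult_cnj N2_def N3_def u1_def u2_def v1_def v2_def x1_def x2_def x3_def y1_def y2_def y3_def
    by (rule fr) (simp_all add: power2_eq_square algebra_simps)
  have cr: "crossD (z2 - z1) (z3 - z1) = u1 * v2 - u2 * v1"
    unfolding crossD_def u1_def u2_def v1_def v2_def x1_def x2_def x3_def y1_def y2_def y3_def by simp
  have c1: "(cmod (z2 - z1))^2 = N1" unfolding N1_def u1_def u2_def x1_def x2_def y1_def y2_def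
    by (simp add: cmod_power2)
  have c2: "(cmod (z3 - z1))^2 = N2" unfolding N2_def v1_def v2_def x1_def x3_def y1_def y3_def
    by (simp add: cmod_power2)
  have c3: "(cmod (z3 - z2))^2 = N3" unfolding N3_def u1_def u2_def v1_def v2_def x1_def x2_def x3_def y1_def y2_def y3_def
    by (simp add: cmod_power2)
  show ?thesis unfolding plus_complex.sel t1 t2 t3 t4 t5 t6 cr c1 c2 c3 mr[symmetric]
    by simp
qed

definition gg :: "(real \<Rightarrow> real) \<Rightarrow> real \<Rightarrow> real \<Rightarrow> complex" where
  "gg A x y = Complex 1 (d1 A x y)"
definition ff :: "(real \<Rightarrow> real) \<Rightarrow> real \<Rightarrow> complex" where
  "ff A x = Complex (fr A x) (fi A x)"
definition FF :: "(real \<Rightarrow> real) \<Rightarrow> real \<Rightarrow> real \<Rightarrow> complex" where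
  "FF A x y = Complex (d1 (fr A) x y) (d1 (fi A) x y)"
definition FF2 :: "(real \<Rightarrow> real) \<Rightarrow> real \<Rightarrow> real \<Rightarrow> real \<Rightarrow> complex" where
  "FF2 A x y z = Complex (d2 (fr A) x y z) (d2 (fi A) x y z)"
definition Tform :: "(real \<Rightarrow> real) \<Rightarrow> real \<Rightarrow> real \<Rightarrow> real \<Rightarrow> complex" where
  "Tform A a b c = -2 * ((FF2 A a b c / gg A a b
      - \<i> * FF A b c * complex_of_real (d2 A a b c) / (gg A a b * gg A b c)) / gg A a c)"
definition cm2 :: "(real \<Rightarrow> real) \<Rightarrow> real \<Rightarrow> real \<Rightarrow> real \<Rightarrow> real" where
  "cm2 A a b c = 4 * (d2 A a b c)^2 / ((1 + (d1 A a b)^2) * (1 + (d1 A a c)^2) * (1 + (d1 A b c)^2))"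

lemma gg_nz: "gg A x y \<noteq> 0"
  unfolding gg_def by (simp add: complex_eq_iff)

lemma gam_diff: "x \<noteq> y \<Longrightarrow> gam A x - gam A y = complex_of_real (x - y) * gg A x y"
  unfolding gam_def gg_def d1_def by (simp add: complex_eq_iff)

lemma ff_diff: "x \<noteq> y \<Longrightarrow> ff A x - ff A y = complex_of_real (x - y) * FF A x y"
  unfolding ff_def FF_def d1_def by (simp add: complex_eq_iff)

lemma FF_diff: "a \<noteq> c \<Longrightarrow> FF A a b - FF A b c = complex_of_real (a - c) * FF2 A a b c"
  unfolding FF_def FF2_def d2_def by (simp add: complex_eq_iff)

lemma gg_diff: "a \<noteq> c \<Longrightarrow> gg A b c - gg A a b = - (\<i> * complex_of_real (a - c) * complex_of_real (d2 A a b c))"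
proof -
  assume "a \<noteq> c"
  have "d1 A b c - d1 A a b = - ((a - c) * ((d1 A a b - d1 A b c) / (a - c)))" using \<open>a \<noteq> c\<close> by simp
  then show ?thesis unfolding gg_def d2_def by (simp add: complex_eq_iff)
qed

lemma gam_inj: "gam A x = gam A y \<longleftrightarrow> x = y"
  unfolding gam_def by (auto simp add: complex_eq_iff)

lemma dd_core0:
  fixes P R Q f1 f2 f3 :: "'a::field"
  assumes "P \<noteq> 0" "R \<noteq> 0" "Q \<noteq> 0" "Q = P + R"
  shows "f1 / (P * Q) + f2 / ((- P) * R) + f3 / ((- Q) * (- R)) = ((f1 - f2) / P - (f2 - f3) / R) / Q"
  using assms(1-3) apply (simp add: field_simps) apply (simp add: assms(4) algebra_simps) done

lemma dd_step:
  fixes F12 F23 F123 g12 g23 g13 q A123 :: complex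
  assumes "g12 \<noteq> 0" "g23 \<noteq> 0" "g13 \<noteq> 0" "q \<noteq> 0"
    and e1: "F12 = F23 + q * F123" and e2: "g23 = g12 - \<i> * q * A123"
  shows "(F12 / g12 - F23 / g23) / (q * g13) = (F123 / g12 - \<i> * F23 * A123 / (g12 * g23)) / g13"
  using assms(1-4) apply (simp add: field_simps) apply (simp add: e1 e2 algebra_simps) done

lemma Tsum:
  fixes A :: "real \<Rightarrow> real"
  assumes "a \<noteq> b" "a \<noteq> c" "b \<noteq> c"
  defines "k \<equiv> \<lambda>x y. kernel A (gam A x) (gam A y)"
  shows "k a b * k a c + k a c * k a b + k b a * k b c + k b c * k b a + k c a * k c b + k c b * k c a
     = Tform A a b c"
proof -
  define za where "za = gam A a"
  define zb where "zb = gam A b"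
  define zc where "zc = gam A c"
  have ne: "za \<noteq> zb" "za \<noteq> zc" "zb \<noteq> zc" using assms(1-3) gam_inj unfolding za_def zb_def zc_def by auto
  have kk: "k x y * k x w = - ff A x / ((gam A x - gam A y) * (gam A x - gam A w))"
    if "x \<noteq> y" "x \<noteq> w" for x y w
    unfolding k_def ff_def using kk_sq[of A x y w] that gam_inj by auto
  have "k a b * k a c + k a c * k a b + k b a * k b c + k b c * k b a + k c a * k c b + k c b * k c a
     = - (2 * (ff A a / ((za - zb) * (za - zc)) + ff A b / ((zb - za) * (zb - zc)) + ff A c / ((zc - za) * (zc - zb))))"
    using assms(1-3) unfolding za_def zb_def zc_def
    by (simp add: kk mult.commute)
  also have "ff A a / ((za - zb) * (za - zc)) + ff A b / ((zb - za) * (zb - zc)) + ff A c / ((zc - za) * (zc - zb))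
     = ((ff A a - ff A b) / (za - zb) - (ff A b - ff A c) / (zb - zc)) / (za - zc)"
  proof -
    have r: "zb - za = - (za - zb)" "zc - za = - (za - zc)" "zc - zb = - (zb - zc)" by simp_all
    show ?thesis unfolding r by (rule dd_core0) (use ne in auto)
  qed
  also have "\<dots> = ((FF A a b / gg A a b) - (FF A b c / gg A b c)) / (complex_of_real (a - c) * gg A a c)"
  proof -
    have x1: "(ff A a - ff A b) / (za - zb) = FF A a b / gg A a b"
      unfolding za_def zb_def ff_diff[OF assms(1)] gam_diff[OF assms(1)] using assms(1)
      by (simp add: mult_divide_mult_cancel_left)
    have x2: "(ff A b - ff A c) / (zb - zc) = FF A b c / gg A b c"
      unfolding zc_def zb_def ff_diff[OF assms(3)] gam_diff[OF assms(3)] using assms(3)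
      by (simp add: mult_divide_mult_cancel_left)
    have x3: "za - zc = complex_of_real (a - c) * gg A a c" unfolding za_def zc_def gam_diff[OF assms(2)] ..
    show ?thesis unfolding x1 x2 x3 ..
  qed
  also have "\<dots> = (FF2 A a b c / gg A a b - \<i> * FF A b c * complex_of_real (d2 A a b c) / (gg A a b * gg A b c)) / gg A a c"
    by (rule dd_step) (use gg_nz assms FF_diff[OF assms(2), of A b] gg_diff[OF assms(2), of A b] in \<open>auto simp: algebra_simps\<close>)
  finally show ?thesis unfolding Tform_def mult_minus_left .
qed

lemma cm2_aux:
  fixes p q r d X Y Z :: real
  assumes "p \<noteq> 0" "q \<noteq> 0" "r \<noteq> 0" "X > 0" "Y > 0" "Z > 0"
  shows "4 * (- (p * r * (q * d)))^2 / ((p^2 * X) * (q^2 * Y) * (r^2 * Z)) = 4 * d^2 / (X * Y * Z)"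
  using assms by (simp add: field_simps power2_eq_square)

lemma crossD_gam:
  assumes "a \<noteq> b" "a \<noteq> c" "b \<noteq> c"
  shows "crossD (gam A b - gam A a) (gam A c - gam A a) = - ((a - b) * (b - c) * ((a - c) * d2 A a b c))"
proof -
  have h1: "(a - c) * d2 A a b c = d1 A a b - d1 A b c" using assms unfolding d2_def by simp
  have h2: "(a - b) * d1 A a b = A a - A b" using assms unfolding d1_def by simp
  have h3: "(b - c) * d1 A b c = A b - A c" using assms unfolding d1_def by simp
  have "- ((a - b) * (b - c) * ((a - c) * d2 A a b c)) = - (b - c) * ((a - b) * d1 A a b) + (a - b) * ((b - c) * d1 A b c)"
    unfolding h1 by (simp add: algebra_simps)
  also have "\<dots> = - (b - c) * (A a - A b) + (a - b) * (A b - A c)" unfolding h2 h3 ..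
  also have "\<dots> = crossD (gam A b - gam A a) (gam A c - gam A a)"
    unfolding crossD_def gam_def by (simp add: algebra_simps)
  finally show ?thesis ..
qed

lemma cmod_gam_sq:
  assumes "x \<noteq> y"
  shows "(cmod (gam A x - gam A y))^2 = (x - y)^2 * (1 + (d1 A x y)^2)"
  unfolding gam_diff[OF assms] norm_mult by (simp add: power_mult_distrib gg_def cmod_power2)

lemma Pval:
  fixes A :: "real \<Rightarrow> real"
  assumes "a \<noteq> b" "a \<noteq> c" "b \<noteq> c"
    and k_def: "k = (\<lambda>x y. kernel A (gam A x) (gam A y))"
  shows "Re (k a b * cnj (k a c) + k a c * cnj (k a b) + k b a * cnj (k b c) + k b c * cnj (k b a)
     + k c a * cnj (k c b) + k c b * cnj (k c a)) = cm2 A a b c"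
proof -
  have ne: "gam A a \<noteq> gam A b" "gam A a \<noteq> gam A c" "gam A b \<noteq> gam A c"
    using assms(1-3) gam_inj by auto
  have kk: "k x y * cnj (k x w) = 1 / ((gam A x - gam A y) * cnj (gam A x - gam A w))"
    if "x \<noteq> y" "x \<noteq> w" for x y w
    unfolding k_def using kk_cnj[of A x y w] that gam_inj by auto
  have "Re (k a b * cnj (k a c) + k a c * cnj (k a b) + k b a * cnj (k b c) + k b c * cnj (k b a)
     + k c a * cnj (k c b) + k c b * cnj (k c a)) =
     4 * (crossD (gam A b - gam A a) (gam A c - gam A a))^2 /
      ((cmod (gam A b - gam A a))^2 * (cmod (gam A c - gam A a))^2 * (cmod (gam A c - gam A b))^2)"
    using melnikov[OF ne] unfolding kk[OF assms(1) assms(2)] kk[OF assms(2) assms(1)]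
      kk[OF assms(1)[symmetric] assms(3)] kk[OF assms(3) assms(1)[symmetric]]
      kk[OF assms(2)[symmetric] assms(3)[symmetric]] kk[OF assms(3)[symmetric] assms(2)[symmetric]]
    by simp
  also have "\<dots> = cm2 A a b c"
  proof -
    have m1: "(cmod (gam A b - gam A a))^2 = (a - b)^2 * (1 + (d1 A a b)^2)"
      using cmod_gam_sq[OF assms(1), of A] by (simp add: norm_minus_commute)
    have m2: "(cmod (gam A c - gam A a))^2 = (a - c)^2 * (1 + (d1 A a c)^2)"
      using cmod_gam_sq[OF assms(2), of A] by (simp add: norm_minus_commute)
    have m3: "(cmod (gam A c - gam A b))^2 = (b - c)^2 * (1 + (d1 A b c)^2)"
      using cmod_gam_sq[OF assms(3), of A] by (simp add: norm_minus_commute)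
    show ?thesis unfolding m1 m2 m3 crossD_gam[OF assms(1-3)] cm2_def
      by (rule cm2_aux) (use assms in \<open>auto simp: add_pos_nonneg\<close>)
  qed
  finally show ?thesis .
qed

lemma triple_ids:
  fixes A :: "real \<Rightarrow> real"
  assumes "a \<noteq> b" "a \<noteq> c" "b \<noteq> c"
  shows "symS (ReK A) (gam A a) (gam A b) (gam A c) = complex_of_real ((cm2 A a b c + Re (Tform A a b c)) / 2)"
    and "symS (ImK A) (gam A a) (gam A b) (gam A c) = complex_of_real ((cm2 A a b c - Re (Tform A a b c)) / 2)"
    and "d2 A a b c \<noteq> 0 \<Longrightarrow> (menger (gam A a) (gam A b) (gam A c))^2 = cm2 A a b c"
proof -
  let ?k = "\<lambda>x y. kernel A (gam A x) (gam A y)"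
  note P = Pval[OF assms refl, of A]
  note T = Tsum[OF assms, of A]
  have "symS (ReK A) (gam A a) (gam A b) (gam A c) = complex_of_real
     (Re (?k a b) * Re (?k a c) + Re (?k a c) * Re (?k a b) + Re (?k b a) * Re (?k b c) + Re (?k b c) * Re (?k b a)
     + Re (?k c a) * Re (?k c b) + Re (?k c b) * Re (?k c a))"
    unfolding symS_expand ReK_def by simp
  also have "\<dots> = complex_of_real ((cm2 A a b c + Re (Tform A a b c)) / 2)"
    unfolding re_pair P[symmetric] T[symmetric] by (simp add: algebra_simps add_divide_distrib)
  finally show "symS (ReK A) (gam A a) (gam A b) (gam A c) = complex_of_real ((cm2 A a b c + Re (Tform A a b c)) / 2)" .
  have "symS (ImK A) (gam A a) (gam A b) (gam A c) = complex_of_real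
     (Im (?k a b) * Im (?k a c) + Im (?k a c) * Im (?k a b) + Im (?k b a) * Im (?k b c) + Im (?k b c) * Im (?k b a)
     + Im (?k c a) * Im (?k c b) + Im (?k c b) * Im (?k c a))"
    unfolding symS_expand ImK_def by simp
  also have "\<dots> = complex_of_real ((cm2 A a b c - Re (Tform A a b c)) / 2)"
    unfolding im_pair P[symmetric] T[symmetric] by (simp add: algebra_simps diff_divide_distrib add_divide_distrib)
  finally show "symS (ImK A) (gam A a) (gam A b) (gam A c) = complex_of_real ((cm2 A a b c - Re (Tform A a b c)) / 2)" .
  assume d0: "d2 A a b c \<noteq> 0"
  have "crossD (gam A b - gam A a) (gam A c - gam A a) \<noteq> 0"
    unfolding crossD_gam[OF assms] using assms d0 by simp
  from menger_sq[OF this] have "(menger (gam A a) (gam A b) (gam A c))^2 =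
     4 * (crossD (gam A b - gam A a) (gam A c - gam A a))^2 /
      ((cmod (gam A b - gam A a))^2 * (cmod (gam A c - gam A a))^2 * (cmod (gam A c - gam A b))^2)" .
  also have "\<dots> = Re (?k a b * cnj (?k a c) + ?k a c * cnj (?k a b) + ?k b a * cnj (?k b c) + ?k b c * cnj (?k b a)
     + ?k c a * cnj (?k c b) + ?k c b * cnj (?k c a))"
  proof -
    have ne: "gam A a \<noteq> gam A b" "gam A a \<noteq> gam A c" "gam A b \<noteq> gam A c"
      using assms(1-3) gam_inj by auto
    have kk: "kernel A (gam A x) (gam A y) * cnj (kernel A (gam A x) (gam A w)) = 1 / ((gam A x - gam A y) * cnj (gam A x - gam A w))"
      if "x \<noteq> y" "x \<noteq> w" for x y w
      using kk_cnj[of A x y w] that gam_inj by auto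
    show ?thesis using melnikov[OF ne] unfolding kk[OF assms(1) assms(2)] kk[OF assms(2) assms(1)]
      kk[OF assms(1)[symmetric] assms(3)] kk[OF assms(3) assms(1)[symmetric]]
      kk[OF assms(2)[symmetric] assms(3)[symmetric]] kk[OF assms(3)[symmetric] assms(2)[symmetric]]
      by simp
  qed
  also have "\<dots> = cm2 A a b c" by (rule P)
  finally show "(menger (gam A a) (gam A b) (gam A c))^2 = cm2 A a b c" .
qed

definition ur :: "real \<Rightarrow> real" where "ur t = (1 - t^2) / (1 + t^2)"
definition ur1 :: "real \<Rightarrow> real" where "ur1 t = - 4 * t / (1 + t^2)^2"
definition ur2 :: "real \<Rightarrow> real" where "ur2 t = (12 * t^2 - 4) / (1 + t^2)^3"
definition ui :: "real \<Rightarrow> real" where "ui t = 2 * t / (1 + t^2)"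
definition ui1 :: "real \<Rightarrow> real" where "ui1 t = 2 * (1 - t^2) / (1 + t^2)^2"
definition ui2 :: "real \<Rightarrow> real" where "ui2 t = (4 * t^3 - 12 * t) / (1 + t^2)^3"

lemma pos1: "(1::real) + t^2 > 0" by (simp add: add_pos_nonneg)

lemma quot_w:
  assumes dP: "(P has_real_derivative P') (at t)"
  shows "((\<lambda>t. P t / (1 + t^2) ^ Suc m) has_real_derivative
     (P' * (1 + t^2) - P t * (2 * real (Suc m) * t)) / (1 + t^2) ^ Suc (Suc m)) (at t)"
proof -
  define w where "w = 1 + t^2"
  have w0: "w \<noteq> 0" using pos1[of t] w_def by simp
  have dw: "((\<lambda>t. 1 + t^2) has_real_derivative 2 * t) (at t)"
    by (auto intro!: derivative_eq_intros)
  have dwn: "((\<lambda>t. (1 + t^2) ^ Suc m) has_real_derivative real (Suc m) * (2 * t * (1 + t^2) ^ m)) (at t)"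
    using DERIV_power[OF dw, of "Suc m"] by simp
  have "((\<lambda>t. P t / (1 + t^2) ^ Suc m) has_real_derivative
     (P' * (1 + t^2) ^ Suc m - real (Suc m) * (2 * t * (1 + t^2) ^ m) * P t) / ((1 + t^2) ^ Suc m) ^ Suc (Suc 0)) (at t)"
    by (rule DERIV_quotient[OF dP dwn]) (use pos1[of t] in simp)
  moreover have "(P' * (1 + t^2) ^ Suc m - real (Suc m) * (2 * t * (1 + t^2) ^ m) * P t) / ((1 + t^2) ^ Suc m) ^ Suc (Suc 0)
     = (P' * (1 + t^2) - P t * (2 * real (Suc m) * t)) / (1 + t^2) ^ Suc (Suc m)"
  proof -
    have wm: "w ^ m \<noteq> 0" using w0 by simp
    have "(P' * w ^ Suc m - real (Suc m) * (2 * t * w ^ m) * P t) / (w ^ Suc m) ^ Suc (Suc 0)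
       = (P' * w - P t * (2 * real (Suc m) * t)) / w ^ Suc (Suc m)"
      using w0 wm by (simp add: field_simps)
    then show ?thesis unfolding w_def .
  qed
  ultimately show ?thesis by simp
qed

lemma fr_eq: "p1 = q1 \<Longrightarrow> p2 = q2 \<Longrightarrow> p1 / p2 = q1 / q2" for p1 p2 q1 q2 :: real by simp

lemma ur_deriv: "(ur has_real_derivative ur1 t) (at t)"
proof -
  have d: "((\<lambda>t. 1 - t^2) has_real_derivative - 2 * t) (at t)" by (auto intro!: derivative_eq_intros)
  have e: "ur = (\<lambda>t::real. (1 - t^2) / (1 + t^2) ^ Suc 0)" unfolding ur_def by simp
  show ?thesis unfolding e
    by (rule DERIV_cong[OF quot_w[OF d]]) (unfold ur1_def, rule fr_eq, simp_all add: algebra_simps power2_eq_square)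
qed

lemma ur1_deriv: "(ur1 has_real_derivative ur2 t) (at t)"
proof -
  have d: "((\<lambda>t. - 4 * t) has_real_derivative - 4) (at t)" by (auto intro!: derivative_eq_intros)
  have e: "ur1 = (\<lambda>t::real. (- 4 * t) / (1 + t^2) ^ Suc 1)" unfolding ur1_def by (simp add: numeral_2_eq_2)
  show ?thesis unfolding e
    by (rule DERIV_cong[OF quot_w[OF d]]) (unfold ur2_def, rule fr_eq, simp_all add: algebra_simps power2_eq_square numeral_3_eq_3)
qed

lemma ui_deriv: "(ui has_real_derivative ui1 t) (at t)"
proof -
  have d: "((\<lambda>t. 2 * t) has_real_derivative 2) (at t)" by (auto intro!: derivative_eq_intros)
  have e: "ui = (\<lambda>t::real. (2 * t) / (1 + t^2) ^ Suc 0)" unfolding ui_def by simp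
  show ?thesis unfolding e
    by (rule DERIV_cong[OF quot_w[OF d]]) (unfold ui1_def, rule fr_eq, simp_all add: algebra_simps power2_eq_square)
qed

lemma ui1_deriv: "(ui1 has_real_derivative ui2 t) (at t)"
proof -
  have d: "((\<lambda>t. 2 * (1 - t^2)) has_real_derivative - 4 * t) (at t)" by (auto intro!: derivative_eq_intros)
  have e: "ui1 = (\<lambda>t::real. (2 * (1 - t^2)) / (1 + t^2) ^ Suc 1)" unfolding ui1_def by (simp add: numeral_2_eq_2)
  show ?thesis unfolding e
    by (rule DERIV_cong[OF quot_w[OF d]]) (unfold ui2_def, rule fr_eq, simp_all add: algebra_simps power2_eq_square power3_eq_cube numeral_3_eq_3)
qed

lemma Tinf_re:
  fixes a b c :: real
  shows "Re (-2 * ((Complex ((ur2 a * b * b + ur1 a * c) / 2) ((ui2 a * b * b + ui1 a * c) / 2) / Complex 1 a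
      - \<i> * Complex (ur1 a * b) (ui1 a * b) * complex_of_real (b / 2) / (Complex 1 a * Complex 1 a)) / Complex 1 a))
    = 2 * b * b / (1 + a^2)^3"
proof -
  define w where "w = 1 + a^2"
  have w0: "w \<noteq> 0" using pos1[of a] w_def by simp
  define W where "W = complex_of_real w"
  have W0: "W \<noteq> 0" using w0 W_def by simp
  define g where "g = Complex 1 a"
  have g0: "g \<noteq> 0" unfolding g_def by (simp add: complex_eq_iff)
  have ii: "\<i> * \<i> = -1" by simp
  have h1: "Complex (ur1 a) (ui1 a) = 2 * \<i> * g^2 / W^2"
  proof -
    have "Complex (ur1 a) (ui1 a) * W^2 = 2 * \<i> * g^2"
      unfolding ur1_def ui1_def W_def g_def w_def[symmetric] using w0
      by (simp add: complex_eq_iff power2_eq_square field_simps)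
    then show ?thesis using W0 by (simp add: eq_divide_eq)
  qed
  have h2: "Complex (ur2 a) (ui2 a) = - 4 * g^3 / W^3"
  proof -
    have "Complex (ur2 a) (ui2 a) * W^3 = (- 4 * g^3)"
      unfolding ur2_def ui2_def W_def g_def w_def[symmetric] using w0
      by (simp add: complex_eq_iff power2_eq_square power3_eq_cube field_simps)
    moreover have "W^3 \<noteq> 0" using W0 by simp
    ultimately show ?thesis by (metis nonzero_eq_divide_eq)
  qed
  have G: "Complex (ur1 a * b) (ui1 a * b) = Complex (ur1 a) (ui1 a) * complex_of_real b"
    by (simp add: complex_eq_iff)
  have F: "Complex ((ur2 a * b * b + ur1 a * c) / 2) ((ui2 a * b * b + ui1 a * c) / 2)
     = (Complex (ur2 a) (ui2 a) * complex_of_real (b * b) + Complex (ur1 a) (ui1 a) * complex_of_real c) / 2"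
    by (simp add: complex_eq_iff)
  have E: "-2 * (((- 4 * g^3 / W^3 * complex_of_real (b * b) + 2 * \<i> * g^2 / W^2 * complex_of_real c) / 2 / g
      - \<i> * (2 * \<i> * g^2 / W^2 * complex_of_real b) * complex_of_real (b / 2) / (g * g)) / g)
     = 4 * g * complex_of_real (b * b) / W^3 - 2 * \<i> * complex_of_real c / W^2
       - 2 * complex_of_real (b * b) / (W^2 * g)"
    using g0 W0 by (simp add: field_simps power2_eq_square power3_eq_cube)
  have ginv: "Re (z / (W^2 * g)) = Re z / (w^2 * w)" if "Im z = 0" for z
  proof -
    have "1 / g = Complex (1 / w) (- a / w)" unfolding g_def w_def using pos1[of a]
      by (simp add: complex_eq_iff Re_divide Im_divide power2_eq_square)
    then have "z / (W^2 * g) = z / W^2 * Complex (1 / w) (- a / w)"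
      by (metis divide_divide_eq_left times_divide_eq_right mult.right_neutral)
    then show ?thesis using that unfolding W_def by (simp add: field_simps power2_eq_square)
  qed
  have r1: "Re (4 * g * complex_of_real (b * b) / W^3) = 4 * (b * b) / w^3"
    unfolding W_def g_def by (simp add: Re_divide_of_real[where r = "w^3", simplified of_real_power])
  have r2: "Re (2 * \<i> * complex_of_real c / W^2) = 0"
    unfolding W_def by (simp add: Re_divide_of_real[where r = "w^2", simplified of_real_power])
  have r3: "Re (2 * complex_of_real (b * b) / (W^2 * g)) = 2 * (b * b) / (w^2 * w)"
    by (subst ginv) simp_all
  show ?thesis
    unfolding F G h1 h2 g_def[symmetric] E minus_complex.sel r1 r2 r3
    using w0 unfolding w_def[symmetric]
    by (simp add: field_simps power2_eq_square power3_eq_cube)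
qed

definition tfilt :: "real \<Rightarrow> (real \<times> real \<times> real) filter" where
  "tfilt x0 = (INF d\<in>{0<..}. principal {(a, b, c). a \<noteq> b \<and> a \<noteq> c \<and> b \<noteq> c \<and>
      \<bar>a - x0\<bar> < d \<and> \<bar>b - x0\<bar> < d \<and> \<bar>c - x0\<bar> < d})"

lemma eventually_tfilt:
  "eventually P (tfilt x0) \<longleftrightarrow> (\<exists>d>0. \<forall>a b c. a \<noteq> b \<and> a \<noteq> c \<and> b \<noteq> c \<and>
      \<bar>a - x0\<bar> < d \<and> \<bar>b - x0\<bar> < d \<and> \<bar>c - x0\<bar> < d \<longrightarrow> P (a, b, c))"
  unfolding tfilt_def
proof (subst eventually_INF_base)
  show "{0<..} \<noteq> ({} :: real set)" by auto
next
  fix d1 d2 :: real assume "d1 \<in> {0<..}" "d2 \<in> {0<..}"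
  then show "\<exists>x\<in>{0<..}. principal {(a, b, c). a \<noteq> b \<and> a \<noteq> c \<and> b \<noteq> c \<and>
      \<bar>a - x0\<bar> < x \<and> \<bar>b - x0\<bar> < x \<and> \<bar>c - x0\<bar> < x} \<le>
    inf (principal {(a, b, c). a \<noteq> b \<and> a \<noteq> c \<and> b \<noteq> c \<and>
      \<bar>a - x0\<bar> < d1 \<and> \<bar>b - x0\<bar> < d1 \<and> \<bar>c - x0\<bar> < d1})
    (principal {(a, b, c). a \<noteq> b \<and> a \<noteq> c \<and> b \<noteq> c \<and>
      \<bar>a - x0\<bar> < d2 \<and> \<bar>b - x0\<bar> < d2 \<and> \<bar>c - x0\<bar> < d2})"
    by (intro bexI[of _ "min d1 d2"]) auto
next
  show "(\<exists>b\<in>{0<..}. eventually P (principal {(a, ba, c). a \<noteq> ba \<and> a \<noteq> c \<and> ba \<noteq> c \<and>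
      \<bar>a - x0\<bar> < b \<and> \<bar>ba - x0\<bar> < b \<and> \<bar>c - x0\<bar> < b})) =
    (\<exists>d>0. \<forall>a b c. a \<noteq> b \<and> a \<noteq> c \<and> b \<noteq> c \<and> \<bar>a - x0\<bar> < d \<and> \<bar>b - x0\<bar> < d \<and> \<bar>c - x0\<bar> < d \<longrightarrow> P (a, b, c))"
    by (auto simp: eventually_principal)
qed

lemma tfilt_proj:
  "((\<lambda>p. fst p) \<longlongrightarrow> x0) (tfilt x0)" "((\<lambda>p. fst (snd p)) \<longlongrightarrow> x0) (tfilt x0)"
  "((\<lambda>p. snd (snd p)) \<longlongrightarrow> x0) (tfilt x0)"
  by (auto intro!: tendstoI simp: eventually_tfilt dist_real_def)

lemma tfilt_distinct:
  "eventually (\<lambda>p. fst p \<noteq> fst (snd p) \<and> fst p \<noteq> snd (snd p) \<and> fst (snd p) \<noteq> snd (snd p)) (tfilt x0)"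
  unfolding eventually_tfilt by (intro exI[of _ 1]) auto

lemma comp_derivs:
  fixes u u1 u2 A1 A2 A3 :: "real \<Rightarrow> real"
  assumes du: "\<And>t. (u has_real_derivative u1 t) (at t)"
    and du1: "\<And>t. (u1 has_real_derivative u2 t) (at t)"
    and cu2: "\<And>t. isCont u2 t"
    and d1: "\<And>x. x \<in> J \<Longrightarrow> (A1 has_real_derivative A2 x) (at x)"
    and d2: "\<And>x. x \<in> J \<Longrightarrow> (A2 has_real_derivative A3 x) (at x)"
    and c3: "isCont A3 x0" and "x0 \<in> J"
  shows "\<And>x. x \<in> J \<Longrightarrow> ((\<lambda>x. u (A1 x)) has_real_derivative u1 (A1 x) * A2 x) (at x)"
    and "\<And>x. x \<in> J \<Longrightarrow> ((\<lambda>x. u1 (A1 x) * A2 x) has_real_derivative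
            u2 (A1 x) * A2 x * A2 x + A3 x * u1 (A1 x)) (at x)"
    and "isCont (\<lambda>x. u2 (A1 x) * A2 x * A2 x + A3 x * u1 (A1 x)) x0"
    and "isCont (\<lambda>x. u1 (A1 x) * A2 x) x0"
proof -
  fix x assume x: "x \<in> J"
  show "((\<lambda>x. u (A1 x)) has_real_derivative u1 (A1 x) * A2 x) (at x)"
    using DERIV_chain2[OF du d1[OF x]] .
  have "((\<lambda>x. u1 (A1 x)) has_real_derivative u2 (A1 x) * A2 x) (at x)"
    using DERIV_chain2[OF du1 d1[OF x]] .
  from DERIV_mult[OF this d2[OF x]]
  show "((\<lambda>x. u1 (A1 x) * A2 x) has_real_derivative u2 (A1 x) * A2 x * A2 x + A3 x * u1 (A1 x)) (at x)" .
next
  have cA1: "isCont A1 x0" using DERIV_isCont[OF d1[OF \<open>x0 \<in> J\<close>]] .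
  have cA2: "isCont A2 x0" using DERIV_isCont[OF d2[OF \<open>x0 \<in> J\<close>]] .
  have cu1: "isCont u1 t" for t using DERIV_isCont[OF du1] .
  have c1: "isCont (\<lambda>x. u1 (A1 x)) x0" using isCont_o2[OF cA1 cu1] .
  have c2: "isCont (\<lambda>x. u2 (A1 x)) x0" using isCont_o2[OF cA1 cu2] .
  show "isCont (\<lambda>x. u2 (A1 x) * A2 x * A2 x + A3 x * u1 (A1 x)) x0"
    using c1 c2 cA2 c3 by (intro continuous_intros) auto
  show "isCont (\<lambda>x. u1 (A1 x) * A2 x) x0"
    using c1 cA2 by (intro continuous_intros) auto
qed

lemma isCont_ur2: "isCont ur2 t"
  unfolding ur2_def by (intro continuous_intros) (use pos1[of t] in simp)
lemma isCont_ui2: "isCont ui2 t"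
  unfolding ui2_def by (intro continuous_intros) (use pos1[of t] in simp)

lemma fr_ur: "fr A = (\<lambda>x. ur (deriv A x))" unfolding fr_def ur_def by auto
lemma fi_ui: "fi A = (\<lambda>x. ui (deriv A x))" unfolding fi_def ui_def by auto

lemma key_limits:
  fixes A :: "real \<Rightarrow> real"
  assumes oJ: "open J" and C3: "C3_on J A" and x0J: "x0 \<in> J" and nz: "deriv (deriv A) x0 \<noteq> 0"
  shows "\<forall>\<epsilon>>0. \<exists>d>0. \<forall>a b c. a \<noteq> b \<and> a \<noteq> c \<and> b \<noteq> c \<and> \<bar>a - x0\<bar> < d \<and> \<bar>b - x0\<bar> < d \<and> \<bar>c - x0\<bar> < d \<longrightarrow>
     d2 A a b c \<noteq> 0 \<and> \<bar>cm2 A a b c - (deriv (deriv A) x0 / (arclen_factor A x0)^3)^2\<bar> < \<epsilon>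
     \<and> \<bar>(Re (Tform A a b c) - 2 * cm2 A a b c) / 2\<bar> < \<epsilon>"
proof (intro allI impI)
  fix \<epsilon> :: real assume "\<epsilon> > 0"
  define A1 where "A1 = deriv A"
  define A2 where "A2 = deriv A1"
  define A3 where "A3 = deriv A2"
  have der0: "\<And>x. x \<in> J \<Longrightarrow> (A has_real_derivative A1 x) (at x)"
    and der1: "\<And>x. x \<in> J \<Longrightarrow> (A1 has_real_derivative A2 x) (at x)"
    and der2: "\<And>x. x \<in> J \<Longrightarrow> (A2 has_real_derivative A3 x) (at x)"
    and cont3: "continuous_on J A3"
    using C3 unfolding C3_on_def A1_def A2_def A3_def by auto
  have c3: "isCont A3 x0" using cont3 oJ x0J continuous_on_eq_continuous_at by blast
  have cA1: "isCont A1 x0" using DERIV_isCont[OF der1[OF x0J]] .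
  have cA2: "isCont A2 x0" using DERIV_isCont[OF der2[OF x0J]] .
  note CR = comp_derivs[OF ur_deriv ur1_deriv isCont_ur2 der1 der2 c3 x0J]
  note CI = comp_derivs[OF ui_deriv ui1_deriv isCont_ui2 der1 der2 c3 x0J]
  have frA: "fr A = (\<lambda>x. ur (A1 x))" unfolding fr_ur A1_def ..
  have fiA: "fi A = (\<lambda>x. ui (A1 x))" unfolding fi_ui A1_def ..
  define F where "F = tfilt x0"
  define fa where "fa = (\<lambda>p::real \<times> real \<times> real. fst p)"
  define fb where "fb = (\<lambda>p::real \<times> real \<times> real. fst (snd p))"
  define fc where "fc = (\<lambda>p::real \<times> real \<times> real. snd (snd p))"
  have pa: "(fa \<longlongrightarrow> x0) F" and pb: "(fb \<longlongrightarrow> x0) F" and pc: "(fc \<longlongrightarrow> x0) F"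
    using tfilt_proj[of x0] unfolding F_def fa_def fb_def fc_def by auto
  have dist3: "eventually (\<lambda>p. fa p \<noteq> fb p \<and> fa p \<noteq> fc p \<and> fb p \<noteq> fc p) F"
    using tfilt_distinct[of x0] unfolding F_def fa_def fb_def fc_def .
  have ab: "eventually (\<lambda>p. fa p \<noteq> fb p) F" and ac: "eventually (\<lambda>p. fa p \<noteq> fc p) F"
    and bc: "eventually (\<lambda>p. fb p \<noteq> fc p) F"
    using dist3 by (auto elim: eventually_mono)
  have lAab: "((\<lambda>p. d1 A (fa p) (fb p)) \<longlongrightarrow> A1 x0) F" by (rule tendsto_d1[OF oJ x0J der0 cA1 pa pb ab])
  have lAac: "((\<lambda>p. d1 A (fa p) (fc p)) \<longlongrightarrow> A1 x0) F" by (rule tendsto_d1[OF oJ x0J der0 cA1 pa pc ac])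
  have lAbc: "((\<lambda>p. d1 A (fb p) (fc p)) \<longlongrightarrow> A1 x0) F" by (rule tendsto_d1[OF oJ x0J der0 cA1 pb pc bc])
  have lA2: "((\<lambda>p. d2 A (fa p) (fb p) (fc p)) \<longlongrightarrow> A2 x0 / 2) F"
    by (rule tendsto_d2[OF oJ x0J der0 der1 cA2 pa pb pc dist3])
  have lfr1: "((\<lambda>p. d1 (fr A) (fb p) (fc p)) \<longlongrightarrow> ur1 (A1 x0) * A2 x0) F"
    unfolding frA using tendsto_d1[OF oJ x0J CR(1) CR(4) pb pc bc] .
  have lfi1: "((\<lambda>p. d1 (fi A) (fb p) (fc p)) \<longlongrightarrow> ui1 (A1 x0) * A2 x0) F"
    unfolding fiA using tendsto_d1[OF oJ x0J CI(1) CI(4) pb pc bc] .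
  have lfr2: "((\<lambda>p. d2 (fr A) (fa p) (fb p) (fc p)) \<longlongrightarrow> (ur2 (A1 x0) * A2 x0 * A2 x0 + A3 x0 * ur1 (A1 x0)) / 2) F"
    unfolding frA using tendsto_d2[OF oJ x0J CR(1) CR(2) CR(3) pa pb pc dist3] .
  have lfi2: "((\<lambda>p. d2 (fi A) (fa p) (fb p) (fc p)) \<longlongrightarrow> (ui2 (A1 x0) * A2 x0 * A2 x0 + A3 x0 * ui1 (A1 x0)) / 2) F"
    unfolding fiA using tendsto_d2[OF oJ x0J CI(1) CI(2) CI(3) pa pb pc dist3] .
  define a where "a = A1 x0"
  define b where "b = A2 x0"
  define c where "c = A3 x0"
  have g0: "Complex 1 a \<noteq> 0" by (simp add: complex_eq_iff)
  have lcm2: "((\<lambda>p. cm2 A (fa p) (fb p) (fc p)) \<longlongrightarrow> 4 * (b / 2)^2 / ((1 + a^2) * (1 + a^2) * (1 + a^2))) F"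
  proof -
    have w: "1 + (A1 x0)^2 > 0" by (rule pos1)
    then have "(1 + (A1 x0)^2) * (1 + (A1 x0)^2) * (1 + (A1 x0)^2) > 0" by (intro mult_pos_pos)
    then have w3: "(1 + (A1 x0)^2) * (1 + (A1 x0)^2) * (1 + (A1 x0)^2) \<noteq> 0" by linarith
    show ?thesis unfolding cm2_def a_def b_def
      by (intro tendsto_intros lA2 lAab lAac lAbc w3)
  qed
  have lT: "((\<lambda>p. Tform A (fa p) (fb p) (fc p)) \<longlongrightarrow>
     -2 * ((Complex ((ur2 a * b * b + ur1 a * c) / 2) ((ui2 a * b * b + ui1 a * c) / 2) / Complex 1 a
      - \<i> * Complex (ur1 a * b) (ui1 a * b) * complex_of_real (b / 2) / (Complex 1 a * Complex 1 a)) / Complex 1 a)) F"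
  proof -
    have g1: "Complex 1 (A1 x0) \<noteq> 0" by (simp add: complex_eq_iff)
    have e1: "(ur2 a * b * b + ur1 a * c) / 2 = (ur2 (A1 x0) * A2 x0 * A2 x0 + A3 x0 * ur1 (A1 x0)) / 2"
      unfolding a_def b_def c_def by (simp add: algebra_simps)
    have e2: "(ui2 a * b * b + ui1 a * c) / 2 = (ui2 (A1 x0) * A2 x0 * A2 x0 + A3 x0 * ui1 (A1 x0)) / 2"
      unfolding a_def b_def c_def by (simp add: algebra_simps)
    show ?thesis unfolding Tform_def FF2_def FF_def gg_def e1 e2
      unfolding a_def b_def
      by (intro tendsto_intros lfr2 lfi2 lfr1 lfi1 lA2 lAab lAbc lAac) (simp_all add: g1)
  qed
  have kap: "(deriv (deriv A) x0 / (arclen_factor A x0)^3)^2 = b * b / (1 + a^2)^3"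
  proof -
    have s: "(arclen_factor A x0)^2 = 1 + a^2" unfolding a_def A1_def by (rule arclen_sq)
    have "((arclen_factor A x0)^3)^2 = ((arclen_factor A x0)^2)^3" by (simp add: power_mult[symmetric] mult.commute)
    then show ?thesis unfolding s b_def A2_def A1_def by (simp add: power_divide power2_eq_square)
  qed
  have lim1: "4 * (b / 2)^2 / ((1 + a^2) * (1 + a^2) * (1 + a^2)) = b * b / (1 + a^2)^3"
    by (simp add: power2_eq_square power3_eq_cube)
  have lim2: "Re (-2 * ((Complex ((ur2 a * b * b + ur1 a * c) / 2) ((ui2 a * b * b + ui1 a * c) / 2) / Complex 1 a
      - \<i> * Complex (ur1 a * b) (ui1 a * b) * complex_of_real (b / 2) / (Complex 1 a * Complex 1 a)) / Complex 1 a))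
     = 2 * b * b / (1 + a^2)^3" by (rule Tinf_re)
  have lE: "((\<lambda>p. (Re (Tform A (fa p) (fb p) (fc p)) - 2 * cm2 A (fa p) (fb p) (fc p)) / 2) \<longlongrightarrow> 0) F"
  proof -
    have "((\<lambda>p. (Re (Tform A (fa p) (fb p) (fc p)) - 2 * cm2 A (fa p) (fb p) (fc p)) / 2) \<longlongrightarrow>
       (2 * b * b / (1 + a^2)^3 - 2 * (b * b / (1 + a^2)^3)) / 2) F"
      unfolding lim2[symmetric] lim1[symmetric] by (intro tendsto_intros lT lcm2) simp_all
    then show ?thesis by simp
  qed
  have lC: "((\<lambda>p. cm2 A (fa p) (fb p) (fc p)) \<longlongrightarrow> (deriv (deriv A) x0 / (arclen_factor A x0)^3)^2) F"
    using lcm2 unfolding lim1 kap .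
  have bnz: "b / 2 \<noteq> 0" using nz unfolding b_def A2_def A1_def by simp
  have ev: "eventually (\<lambda>p. d2 A (fa p) (fb p) (fc p) \<noteq> 0 \<and>
      \<bar>cm2 A (fa p) (fb p) (fc p) - (deriv (deriv A) x0 / (arclen_factor A x0)^3)^2\<bar> < \<epsilon> \<and>
      \<bar>(Re (Tform A (fa p) (fb p) (fc p)) - 2 * cm2 A (fa p) (fb p) (fc p)) / 2\<bar> < \<epsilon>) F"
  proof -
    have "\<bar>b / 2\<bar> > 0" using bnz by simp
    from tendstoD[OF lA2[unfolded b_def[symmetric]] this]
    have e1: "eventually (\<lambda>p. d2 A (fa p) (fb p) (fc p) \<noteq> 0) F"
      by (rule eventually_mono) (auto simp: dist_real_def)
    have e2: "eventually (\<lambda>p. \<bar>cm2 A (fa p) (fb p) (fc p) - (deriv (deriv A) x0 / (arclen_factor A x0)^3)^2\<bar> < \<epsilon>) F"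
      using tendstoD[OF lC \<open>\<epsilon> > 0\<close>] by (simp add: dist_real_def)
    have e3: "eventually (\<lambda>p. \<bar>(Re (Tform A (fa p) (fb p) (fc p)) - 2 * cm2 A (fa p) (fb p) (fc p)) / 2\<bar> < \<epsilon>) F"
      using tendstoD[OF lE \<open>\<epsilon> > 0\<close>] by (simp add: dist_real_def)
    show ?thesis using e1 e2 e3 by eventually_elim auto
  qed
  then show "\<exists>d>0. \<forall>a b c. a \<noteq> b \<and> a \<noteq> c \<and> b \<noteq> c \<and> \<bar>a - x0\<bar> < d \<and> \<bar>b - x0\<bar> < d \<and> \<bar>c - x0\<bar> < d \<longrightarrow>
     d2 A a b c \<noteq> 0 \<and> \<bar>cm2 A a b c - (deriv (deriv A) x0 / (arclen_factor A x0)^3)^2\<bar> < \<epsilon>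
     \<and> \<bar>(Re (Tform A a b c) - 2 * cm2 A a b c) / 2\<bar> < \<epsilon>"
    unfolding F_def eventually_tfilt fa_def fb_def fc_def by simp
qed

theorem corollary1p2:
  fixes J :: "real set" and A :: "real \<Rightarrow> real" and x0 :: real
  assumes "open J" and "is_interval J"
    and "C3_on J A"
    and "x0 \<in> J"
    and "deriv (deriv A) x0 \<noteq> 0"
  defines "\<kappa>0 \<equiv> deriv (deriv A) x0 / (arclen_factor A x0) ^ 3"
  shows "\<exists>\<epsilon>0>0. \<forall>\<epsilon>. 0 < \<epsilon> \<and> \<epsilon> < \<epsilon>0 \<longrightarrow>
    (\<exists>\<delta>>0. {x0 - \<delta> <..< x0 + \<delta>} \<subseteq> J
      \<and> (\<forall>z1 \<in> graph_curve A {x0 - \<delta> <..< x0 + \<delta>}.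
           \<forall>z2 \<in> graph_curve A {x0 - \<delta> <..< x0 + \<delta>}.
           \<forall>z3 \<in> graph_curve A {x0 - \<delta> <..< x0 + \<delta>}.
           z1 \<noteq> z2 \<and> z1 \<noteq> z3 \<and> z2 \<noteq> z3 \<longrightarrow>
             \<bar>(menger z1 z2 z3)\<^sup>2 - \<kappa>0\<^sup>2\<bar> < \<epsilon>
           \<and> cmod (symS (ReK A) z1 z2 z3 - of_real (3/2 * (menger z1 z2 z3)\<^sup>2)) < \<epsilon>
           \<and> cmod (symS (ImK A) z1 z2 z3 + of_real (1/2 * (menger z1 z2 z3)\<^sup>2)) < \<epsilon>)
      \<and> (\<forall>z1 \<in> graph_curve A {x0 - \<delta> <..< x0 + \<delta>}.
           \<forall>z2 \<in> graph_curve A {x0 - \<delta> <..< x0 + \<delta>}.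
           \<forall>z3 \<in> graph_curve A {x0 - \<delta> <..< x0 + \<delta>}.
           \<not> collinear {z1, z2, z3} \<longrightarrow>
             cmod (symS (ReK A) z1 z2 z3 / of_real ((menger z1 z2 z3)\<^sup>2) - 3/2)
               < \<epsilon> / (\<kappa>0\<^sup>2 - \<epsilon>)
           \<and> cmod (symS (ImK A) z1 z2 z3 / of_real ((menger z1 z2 z3)\<^sup>2) + 1/2)
               < \<epsilon> / (\<kappa>0\<^sup>2 - \<epsilon>)))"
proof -
  have sp: "arclen_factor A x0 > 0" by (rule arclen_pos)
  have k0: "\<kappa>0 \<noteq> 0" unfolding \<kappa>0_def using assms(5) sp by simp
  have kpos: "\<kappa>0\<^sup>2 > 0" using k0 by simp
  show ?thesis
  proof (rule exI[of _ "\<kappa>0\<^sup>2"], intro conjI allI impI kpos)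
    fix \<epsilon> :: real assume e: "0 < \<epsilon> \<and> \<epsilon> < \<kappa>0\<^sup>2"
    then have "\<epsilon> > 0" by simp
    from key_limits[OF assms(1) assms(3) assms(4) assms(5), rule_format, OF this]
    obtain d where d: "d > 0" and H: "\<And>a b c. a \<noteq> b \<and> a \<noteq> c \<and> b \<noteq> c \<and> \<bar>a - x0\<bar> < d \<and> \<bar>b - x0\<bar> < d \<and> \<bar>c - x0\<bar> < d \<Longrightarrow>
       d2 A a b c \<noteq> 0 \<and> \<bar>cm2 A a b c - \<kappa>0\<^sup>2\<bar> < \<epsilon> \<and> \<bar>(Re (Tform A a b c) - 2 * cm2 A a b c) / 2\<bar> < \<epsilon>"
      unfolding \<kappa>0_def by blast
    obtain dJ where dJ: "dJ > 0" "ball x0 dJ \<subseteq> J" using assms(1) assms(4) open_contains_ball by blast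
    define \<delta> where "\<delta> = min d dJ"
    have "\<delta> > 0" using d dJ \<delta>_def by simp
    define I where "I = {x0 - \<delta> <..< x0 + \<delta>}"
    have sub: "I \<subseteq> J"
    proof
      fix x assume "x \<in> I"
      then have "dist x0 x < dJ" unfolding I_def \<delta>_def dist_real_def by auto
      then show "x \<in> J" using dJ(2) by auto
    qed
    have gc: "\<exists>x\<in>I. z = gam A x" if "z \<in> graph_curve A I" for z
      using that unfolding graph_curve_def gam_def by auto
    have inI: "\<bar>x - x0\<bar> < d" if "x \<in> I" for x using that unfolding I_def \<delta>_def by auto
    have main: "\<bar>(menger z1 z2 z3)\<^sup>2 - \<kappa>0\<^sup>2\<bar> < \<epsilon>
           \<and> cmod (symS (ReK A) z1 z2 z3 - of_real (3/2 * (menger z1 z2 z3)\<^sup>2)) < \<epsilon>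
           \<and> cmod (symS (ImK A) z1 z2 z3 + of_real (1/2 * (menger z1 z2 z3)\<^sup>2)) < \<epsilon>"
      if z: "z1 \<in> graph_curve A I" "z2 \<in> graph_curve A I" "z3 \<in> graph_curve A I"
        and ne: "z1 \<noteq> z2" "z1 \<noteq> z3" "z2 \<noteq> z3" for z1 z2 z3
    proof -
      obtain a b c where abc: "a \<in> I" "b \<in> I" "c \<in> I" and zz: "z1 = gam A a" "z2 = gam A b" "z3 = gam A c"
        using gc[OF z(1)] gc[OF z(2)] gc[OF z(3)] by blast
      have dab: "a \<noteq> b" "a \<noteq> c" "b \<noteq> c" using ne zz by auto
      have h: "d2 A a b c \<noteq> 0 \<and> \<bar>cm2 A a b c - \<kappa>0\<^sup>2\<bar> < \<epsilon> \<and> \<bar>(Re (Tform A a b c) - 2 * cm2 A a b c) / 2\<bar> < \<epsilon>"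
        using H dab inI abc by blast
      have m: "(menger z1 z2 z3)\<^sup>2 = cm2 A a b c" unfolding zz using triple_ids(3)[OF dab] h by blast
      have sr: "symS (ReK A) z1 z2 z3 - of_real (3/2 * cm2 A a b c)
          = complex_of_real ((Re (Tform A a b c) - 2 * cm2 A a b c) / 2)"
        unfolding zz triple_ids(1)[OF dab] of_real_diff[symmetric]
        by (simp add: algebra_simps add_divide_distrib diff_divide_distrib)
      have si: "symS (ImK A) z1 z2 z3 + of_real (1/2 * cm2 A a b c)
          = complex_of_real (- ((Re (Tform A a b c) - 2 * cm2 A a b c) / 2))"
        unfolding zz triple_ids(2)[OF dab] of_real_add[symmetric]
        by (simp add: algebra_simps add_divide_distrib diff_divide_distrib)
      show ?thesis unfolding m sr si norm_of_real using h by simp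
    qed
    have c1: "\<forall>z1\<in>graph_curve A {x0 - \<delta><..<x0 + \<delta>}. \<forall>z2\<in>graph_curve A {x0 - \<delta><..<x0 + \<delta>}.
        \<forall>z3\<in>graph_curve A {x0 - \<delta><..<x0 + \<delta>}. z1 \<noteq> z2 \<and> z1 \<noteq> z3 \<and> z2 \<noteq> z3 \<longrightarrow>
          \<bar>(menger z1 z2 z3)\<^sup>2 - \<kappa>0\<^sup>2\<bar> < \<epsilon> \<and>
          cmod (symS (ReK A) z1 z2 z3 - complex_of_real (3 / 2 * (menger z1 z2 z3)\<^sup>2)) < \<epsilon> \<and>
          cmod (symS (ImK A) z1 z2 z3 + complex_of_real (1 / 2 * (menger z1 z2 z3)\<^sup>2)) < \<epsilon>"
    proof (intro ballI impI)
      fix z1 z2 z3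
      assume "z1 \<in> graph_curve A {x0 - \<delta><..<x0 + \<delta>}" "z2 \<in> graph_curve A {x0 - \<delta><..<x0 + \<delta>}"
        "z3 \<in> graph_curve A {x0 - \<delta><..<x0 + \<delta>}" "z1 \<noteq> z2 \<and> z1 \<noteq> z3 \<and> z2 \<noteq> z3"
      then show "\<bar>(menger z1 z2 z3)\<^sup>2 - \<kappa>0\<^sup>2\<bar> < \<epsilon> \<and>
          cmod (symS (ReK A) z1 z2 z3 - complex_of_real (3 / 2 * (menger z1 z2 z3)\<^sup>2)) < \<epsilon> \<and>
          cmod (symS (ImK A) z1 z2 z3 + complex_of_real (1 / 2 * (menger z1 z2 z3)\<^sup>2)) < \<epsilon>"
        using main unfolding I_def by blast
    qed
    have c2: "\<forall>z1\<in>graph_curve A {x0 - \<delta><..<x0 + \<delta>}. \<forall>z2\<in>graph_curve A {x0 - \<delta><..<x0 + \<delta>}.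
        \<forall>z3\<in>graph_curve A {x0 - \<delta><..<x0 + \<delta>}. \<not> collinear {z1, z2, z3} \<longrightarrow>
          cmod (symS (ReK A) z1 z2 z3 / complex_of_real ((menger z1 z2 z3)\<^sup>2) - 3 / 2) < \<epsilon> / (\<kappa>0\<^sup>2 - \<epsilon>) \<and>
          cmod (symS (ImK A) z1 z2 z3 / complex_of_real ((menger z1 z2 z3)\<^sup>2) + 1 / 2) < \<epsilon> / (\<kappa>0\<^sup>2 - \<epsilon>)"
    proof (intro ballI impI)
      fix z1 z2 z3
      assume zs: "z1 \<in> graph_curve A {x0 - \<delta><..<x0 + \<delta>}" "z2 \<in> graph_curve A {x0 - \<delta><..<x0 + \<delta>}"
        "z3 \<in> graph_curve A {x0 - \<delta><..<x0 + \<delta>}" and nc: "\<not> collinear {z1, z2, z3}"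
      have ne: "z1 \<noteq> z2" "z1 \<noteq> z3" "z2 \<noteq> z3"
        using nc collinear_2 by (auto simp: insert_commute)
      note M = main[OF zs[folded I_def] ne]
      define m where "m = (menger z1 z2 z3)\<^sup>2"
      have mpos: "m > \<kappa>0\<^sup>2 - \<epsilon>" "\<kappa>0\<^sup>2 - \<epsilon> > 0" using M e unfolding m_def by linarith+
      then have m0: "m > 0" by linarith
      have bound: "cmod (S / complex_of_real m + r) < \<epsilon> / (\<kappa>0\<^sup>2 - \<epsilon>)"
        if hS: "cmod (S + complex_of_real (r * m)) < \<epsilon>" for S :: complex and r :: real
      proof -
        have "S / complex_of_real m + r = (S + complex_of_real (r * m)) / complex_of_real m"
          using m0 by (simp add: field_simps)
        then have "cmod (S / complex_of_real m + r) = cmod (S + complex_of_real (r * m)) / m"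
          using m0 by (simp add: norm_divide)
        also have "\<dots> < \<epsilon> / m" using hS m0 by (simp add: divide_strict_right_mono)
        also have "\<dots> < \<epsilon> / (\<kappa>0\<^sup>2 - \<epsilon>)" using mpos \<open>\<epsilon> > 0\<close> by (intro divide_strict_left_mono) auto
        finally show ?thesis .
      qed
      have b1: "cmod (symS (ReK A) z1 z2 z3 + complex_of_real ((- (3/2)) * m)) < \<epsilon>"
        using M unfolding m_def by (simp add: of_real_mult)
      have b2: "cmod (symS (ImK A) z1 z2 z3 + complex_of_real ((1/2) * m)) < \<epsilon>"
        using M unfolding m_def by simp
      have r1: "cmod (symS (ReK A) z1 z2 z3 / complex_of_real ((menger z1 z2 z3)\<^sup>2) - 3 / 2) < \<epsilon> / (\<kappa>0\<^sup>2 - \<epsilon>)"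
        using bound[OF b1] unfolding m_def by simp
      have r2: "cmod (symS (ImK A) z1 z2 z3 / complex_of_real ((menger z1 z2 z3)\<^sup>2) + 1 / 2) < \<epsilon> / (\<kappa>0\<^sup>2 - \<epsilon>)"
        using bound[OF b2] unfolding m_def by simp
      show "cmod (symS (ReK A) z1 z2 z3 / complex_of_real ((menger z1 z2 z3)\<^sup>2) - 3 / 2) < \<epsilon> / (\<kappa>0\<^sup>2 - \<epsilon>) \<and>
          cmod (symS (ImK A) z1 z2 z3 / complex_of_real ((menger z1 z2 z3)\<^sup>2) + 1 / 2) < \<epsilon> / (\<kappa>0\<^sup>2 - \<epsilon>)"
        using r1 r2 ..
    qed
    have sub2: "{x0 - \<delta><..<x0 + \<delta>} \<subseteq> J" using sub unfolding I_def .
    show "\<exists>\<delta>>0. {x0 - \<delta><..<x0 + \<delta>} \<subseteq> J \<and>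
      (\<forall>z1\<in>graph_curve A {x0 - \<delta><..<x0 + \<delta>}. \<forall>z2\<in>graph_curve A {x0 - \<delta><..<x0 + \<delta>}.
        \<forall>z3\<in>graph_curve A {x0 - \<delta><..<x0 + \<delta>}. z1 \<noteq> z2 \<and> z1 \<noteq> z3 \<and> z2 \<noteq> z3 \<longrightarrow>
          \<bar>(menger z1 z2 z3)\<^sup>2 - \<kappa>0\<^sup>2\<bar> < \<epsilon> \<and>
          cmod (symS (ReK A) z1 z2 z3 - complex_of_real (3 / 2 * (menger z1 z2 z3)\<^sup>2)) < \<epsilon> \<and>
          cmod (symS (ImK A) z1 z2 z3 + complex_of_real (1 / 2 * (menger z1 z2 z3)\<^sup>2)) < \<epsilon>) \<and>
      (\<forall>z1\<in>graph_curve A {x0 - \<delta><..<x0 + \<delta>}. \<forall>z2\<in>graph_curve A {x0 - \<delta><..<x0 + \<delta>}.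
        \<forall>z3\<in>graph_curve A {x0 - \<delta><..<x0 + \<delta>}. \<not> collinear {z1, z2, z3} \<longrightarrow>
          cmod (symS (ReK A) z1 z2 z3 / complex_of_real ((menger z1 z2 z3)\<^sup>2) - 3 / 2) < \<epsilon> / (\<kappa>0\<^sup>2 - \<epsilon>) \<and>
          cmod (symS (ImK A) z1 z2 z3 / complex_of_real ((menger z1 z2 z3)\<^sup>2) + 1 / 2) < \<epsilon> / (\<kappa>0\<^sup>2 - \<epsilon>))"
      using c1 c2 sub2 \<open>\<delta> > 0\<close> by blast
  qed
qed

end
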